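(* Let $H$ be a $k$-linear semi-Hopf category and let $A$ be an $H$-Galois category extension of $B=A^{{\rm co}H}$. Then for all $x,y,z\in X$ the map $$\delta^x_{yz}:{\rm Hom}_k(H_{xz},A_{zy})\to{}_{B_x}{\rm Hom}(A_{xz},A_{xy}),\qquad\delta^x_{yz}(g)(a)=a_{[0]}g(a_{[1]}),$$ is bijective, with inverse $\varphi\mapsto\big(h\mapsto\sum_i l_i(h)\varphi(r_i(h))\big)$ where $\sum_i l_i(h)\otimes_{B_x}r_i(h)=({\rm can}^z_{xz})^{-1}(1_z\otimes h)$. Moreover $\delta$ is a morphism of clusters $\#(H,A)\to{}_B{\rm End}(A)^{\rm op}$, i.e. $\delta^x_{yu}(g\#g')=\delta^x_{yz}(g)\circ\delta^x_{zu}(g')$ and $\delta^x_{yy}(i^x_y)={\rm id}_{A_{xy}}$; hence $\delta$ is an isomorphism of clusters.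
   Context: Let $k$ be a commutative ring; unadorned $\otimes$ is over $k$. A $k$-linear category $A$ with class of objects $X$ consists of $k$-modules $A_{xy}$, associative compositions $A_{xy}\otimes A_{yz}\to A_{xz}$, $a\otimes b\mapsto ab$, and units $1_x\in A_{xx}$. A $k$-linear semi-Hopf category $H$ (objects $X$) is a $k$-linear category in which each $H_{xy}$ is a $k$-coalgebra with $\Delta_{xy}(h)=h_{(1)}\otimes h_{(2)}$ and counit $\varepsilon_{xy}$, such that $\Delta_{xz}(hh')=h_{(1)}h'_{(1)}\otimes h_{(2)}h'_{(2)}$, $\Delta_{xx}(1_x)=1_x\otimes1_x$, $\varepsilon_{xz}(hh')=\varepsilon_{xy}(h)\varepsilon_{yz}(h')$, $\varepsilon_{xx}(1_x)=1$. A right $H$-comodule category is a $k$-linear category $A$ with objects $X$ such that each $A_{xy}$ is a right $H_{xy}$-comodule, $\rho_{xy}(a)=a_{[0]}\otimes a_{[1]}$, with $\rho_{xz}(ab)=a_{[0]}b_{[0]}\otimes a_{[1]}b_{[1]}$ and $\rho_{xx}(1_x)=1_x\otimes1_x$. Its coinvariants are $B_x=\{a\in A_{xx}\mid\rho_{xx}(a)=a\otimes1_x\}$. $A$ is an $H$-Galois category extension of $B$ if all ${\rm can}^z_{xy}:A_{zx}\otimes_{B_x}A_{xy}\to A_{zy}\otimes H_{xy}$, $a\otimes_{B_x}a'\mapsto aa'_{[0]}\otimes a'_{[1]}$, are bijective. A $k$-linear cluster is a family $(\mathcal{C}^x)_{x\in X}$ of $k$-linear categories with object class $X$; a morphism of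 clusters is a family of $k$-linear functors that are the identity on objects. The Koppinen cluster $\mathcal{C}=\#(H,A)$ has $\mathcal{C}^x_{yz}={\rm Hom}_k(H_{xz},A_{zy})$, with multiplication, for $g\in\mathcal{C}^x_{yz}$, $g'\in\mathcal{C}^x_{zu}$, $h\in H_{xu}$: $(g\#g')(h)=g'(h_{(2)})_{[0]}\,g\big(h_{(1)}g'(h_{(2)})_{[1]}\big)$, and units $i^x_y(h)=\varepsilon_{xy}(h)1_y$. ${}_B{\rm End}(A)^{\rm op}$ is the cluster with components ${}_{B_x}{\rm Hom}(A_{xz},A_{xy})$ in position $(x;y,z)$, multiplied by composition. *)

theory Defs
  imports Main "HOL.Modules" "HOL-Library.Function_Algebras"
begin

text \<open>A k-module is modelled as a k-submodule of an ambient k-module ('v, scale).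
An element of a tensor product M \<otimes> N is represented by a finitely supported
function ('a \<times> 'b \<Rightarrow> 'k) (a finite formal k-linear combination of pairs),
two representatives being equal in the tensor product iff their difference
lies in the k-span of the defining relations.\<close>

definition fsupp :: "('p \<Rightarrow> 'k::zero) \<Rightarrow> 'p set" where
  "fsupp f = {p. f p \<noteq> 0}"

definition sing :: "'p \<Rightarrow> 'p \<Rightarrow> 'k::{zero,one}" where
  "sing p = (\<lambda>q. if q = p then 1 else 0)"

definition fscale :: "'k::times \<Rightarrow> ('p \<Rightarrow> 'k) \<Rightarrow> 'p \<Rightarrow> 'k" where
  "fscale r f = (\<lambda>q. r * f q)"

definition tsum :: "('k \<Rightarrow> 'v \<Rightarrow> 'v) \<Rightarrow> ('p \<Rightarrow> 'k::comm_ring_1) \<Rightarrow> ('p \<Rightarrow> 'v::comm_monoid_add) \<Rightarrow> 'v" where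
  "tsum s f F = (\<Sum>p\<in>fsupp f. s (f p) (F p))"

definition fspan :: "('p \<Rightarrow> 'k::comm_ring_1) set \<Rightarrow> ('p \<Rightarrow> 'k) set" where
  "fspan S = module.span fscale S"

definition trep2 :: "'a set \<Rightarrow> 'b set \<Rightarrow> ('a \<times> 'b \<Rightarrow> 'k::zero) \<Rightarrow> bool" where
  "trep2 M N f \<longleftrightarrow> finite (fsupp f) \<and> fsupp f \<subseteq> M \<times> N"

definition trep3 :: "'a set \<Rightarrow> 'b set \<Rightarrow> 'c set \<Rightarrow> ('a \<times> 'b \<times> 'c \<Rightarrow> 'k::zero) \<Rightarrow> bool" where
  "trep3 M N P f \<longleftrightarrow> finite (fsupp f) \<and> fsupp f \<subseteq> M \<times> N \<times> P"

text \<open>Relations of M \<otimes>_k N, plus extra identifications Bal (used for balanced tensor products).\<close>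
definition rels2 ::
  "('k::comm_ring_1 \<Rightarrow> 'a::ab_group_add \<Rightarrow> 'a) \<Rightarrow> ('k \<Rightarrow> 'b::ab_group_add \<Rightarrow> 'b) \<Rightarrow> 'a set \<Rightarrow> 'b set
   \<Rightarrow> (('a \<times> 'b) \<times> ('a \<times> 'b)) set \<Rightarrow> ('a \<times> 'b \<Rightarrow> 'k) set" where
  "rels2 sM sN M N Bal =
     {sing (m + m', n) - sing (m, n) - sing (m', n) | m m' n. m \<in> M \<and> m' \<in> M \<and> n \<in> N}
   \<union> {sing (m, n + n') - sing (m, n) - sing (m, n') | m n n'. m \<in> M \<and> n \<in> N \<and> n' \<in> N}
   \<union> {sing (sM r m, n) - fscale r (sing (m, n)) | r m n. m \<in> M \<and> n \<in> N}
   \<union> {sing (m, sN r n) - fscale r (sing (m, n)) | r m n. m \<in> M \<and> n \<in> N}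
   \<union> {sing p - sing q | p q. (p, q) \<in> Bal}"

definition teq2 ::
  "('k::comm_ring_1 \<Rightarrow> 'a::ab_group_add \<Rightarrow> 'a) \<Rightarrow> ('k \<Rightarrow> 'b::ab_group_add \<Rightarrow> 'b) \<Rightarrow> 'a set \<Rightarrow> 'b set
   \<Rightarrow> (('a \<times> 'b) \<times> ('a \<times> 'b)) set \<Rightarrow> ('a \<times> 'b \<Rightarrow> 'k) \<Rightarrow> ('a \<times> 'b \<Rightarrow> 'k) \<Rightarrow> bool" where
  "teq2 sM sN M N Bal f g \<longleftrightarrow> trep2 M N f \<and> trep2 M N g \<and> f - g \<in> fspan (rels2 sM sN M N Bal)"

definition rels3 ::
  "('k::comm_ring_1 \<Rightarrow> 'a::ab_group_add \<Rightarrow> 'a) \<Rightarrow> ('k \<Rightarrow> 'b::ab_group_add \<Rightarrow> 'b) \<Rightarrow> ('k \<Rightarrow> 'c::ab_group_add \<Rightarrow> 'c)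
   \<Rightarrow> 'a set \<Rightarrow> 'b set \<Rightarrow> 'c set \<Rightarrow> ('a \<times> 'b \<times> 'c \<Rightarrow> 'k) set" where
  "rels3 sM sN sP M N P =
     {sing (m + m', n, p) - sing (m, n, p) - sing (m', n, p) | m m' n p. m \<in> M \<and> m' \<in> M \<and> n \<in> N \<and> p \<in> P}
   \<union> {sing (m, n + n', p) - sing (m, n, p) - sing (m, n', p) | m n n' p. m \<in> M \<and> n \<in> N \<and> n' \<in> N \<and> p \<in> P}
   \<union> {sing (m, n, p + p') - sing (m, n, p) - sing (m, n, p') | m n p p'. m \<in> M \<and> n \<in> N \<and> p \<in> P \<and> p' \<in> P}
   \<union> {sing (sM r m, n, p) - fscale r (sing (m, n, p)) | r m n p. m \<in> M \<and> n \<in> N \<and> p \<in> P}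
   \<union> {sing (m, sN r n, p) - fscale r (sing (m, n, p)) | r m n p. m \<in> M \<and> n \<in> N \<and> p \<in> P}
   \<union> {sing (m, n, sP r p) - fscale r (sing (m, n, p)) | r m n p. m \<in> M \<and> n \<in> N \<and> p \<in> P}"

definition teq3 ::
  "('k::comm_ring_1 \<Rightarrow> 'a::ab_group_add \<Rightarrow> 'a) \<Rightarrow> ('k \<Rightarrow> 'b::ab_group_add \<Rightarrow> 'b) \<Rightarrow> ('k \<Rightarrow> 'c::ab_group_add \<Rightarrow> 'c)
   \<Rightarrow> 'a set \<Rightarrow> 'b set \<Rightarrow> 'c set \<Rightarrow> ('a \<times> 'b \<times> 'c \<Rightarrow> 'k) \<Rightarrow> ('a \<times> 'b \<times> 'c \<Rightarrow> 'k) \<Rightarrow> bool" where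
  "teq3 sM sN sP M N P f g \<longleftrightarrow> trep3 M N P f \<and> trep3 M N P g \<and> f - g \<in> fspan (rels3 sM sN sP M N P)"

text \<open>(t \<otimes> c) and (a \<otimes> t) for a two-fold tensor t.\<close>
definition tl3 :: "('a \<times> 'b \<Rightarrow> 'k::{times,zero,one}) \<Rightarrow> 'c \<Rightarrow> 'a \<times> 'b \<times> 'c \<Rightarrow> 'k" where
  "tl3 t c = (\<lambda>(a, b, c'). t (a, b) * (if c' = c then 1 else 0))"

definition tr3 :: "'a \<Rightarrow> ('b \<times> 'c \<Rightarrow> 'k::{times,zero,one}) \<Rightarrow> 'a \<times> 'b \<times> 'c \<Rightarrow> 'k" where
  "tr3 a t = (\<lambda>(a', b, c). (if a' = a then 1 else 0) * t (b, c))"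

section \<open>k-linear maps (extensional: 0 outside the domain)\<close>

definition khom :: "('k \<Rightarrow> 'a::ab_group_add \<Rightarrow> 'a) \<Rightarrow> ('k \<Rightarrow> 'b::ab_group_add \<Rightarrow> 'b) \<Rightarrow> 'a set \<Rightarrow> 'b set
   \<Rightarrow> ('a \<Rightarrow> 'b) set" where
  "khom sM sN M N = {f. (\<forall>m\<in>M. f m \<in> N) \<and> (\<forall>m\<in>M. \<forall>m'\<in>M. f (m + m') = f m + f m')
      \<and> (\<forall>r. \<forall>m\<in>M. f (sM r m) = sN r (f m)) \<and> (\<forall>m. m \<notin> M \<longrightarrow> f m = 0)}"

text \<open>Objects: type 'x. Hom-modules C x y are k-submodules of an ambient k-module 'v;
composition m x y z : C x y \<times> C y z \<rightarrow> C x z, a b \<mapsto> ab; units u x.\<close>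
definition klin_cat :: "('k::comm_ring_1 \<Rightarrow> 'v::ab_group_add \<Rightarrow> 'v) \<Rightarrow> ('x \<Rightarrow> 'x \<Rightarrow> 'v set)
   \<Rightarrow> ('x \<Rightarrow> 'x \<Rightarrow> 'x \<Rightarrow> 'v \<Rightarrow> 'v \<Rightarrow> 'v) \<Rightarrow> ('x \<Rightarrow> 'v) \<Rightarrow> bool" where
  "klin_cat s C m u \<longleftrightarrow> module s \<and> (\<forall>x y. module.subspace s (C x y))
    \<and> (\<forall>x y z. \<forall>a\<in>C x y. \<forall>b\<in>C y z. m x y z a b \<in> C x z)
    \<and> (\<forall>x y z. \<forall>a\<in>C x y. \<forall>a'\<in>C x y. \<forall>b\<in>C y z. m x y z (a + a') b = m x y z a b + m x y z a' b)
    \<and> (\<forall>x y z. \<forall>a\<in>C x y. \<forall>b\<in>C y z. \<forall>b'\<in>C y z. m x y z a (b + b') = m x y z a b + m x y z a b')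
    \<and> (\<forall>x y z r. \<forall>a\<in>C x y. \<forall>b\<in>C y z. m x y z (s r a) b = s r (m x y z a b))
    \<and> (\<forall>x y z r. \<forall>a\<in>C x y. \<forall>b\<in>C y z. m x y z a (s r b) = s r (m x y z a b))
    \<and> (\<forall>x y z w. \<forall>a\<in>C x y. \<forall>b\<in>C y z. \<forall>c\<in>C z w.
         m x y w a (m y z w b c) = m x z w (m x y z a b) c)
    \<and> (\<forall>x. u x \<in> C x x)
    \<and> (\<forall>x y. \<forall>a\<in>C x y. m x x y (u x) a = a \<and> m x y y a (u y) = a)"

definition kcoalg :: "('k::comm_ring_1 \<Rightarrow> 'h::ab_group_add \<Rightarrow> 'h) \<Rightarrow> 'h set
   \<Rightarrow> ('h \<Rightarrow> 'h \<times> 'h \<Rightarrow> 'k) \<Rightarrow> ('h \<Rightarrow> 'k) \<Rightarrow> bool" where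
  "kcoalg s M D e \<longleftrightarrow>
      (\<forall>h\<in>M. trep2 M M (D h))
    \<and> (\<forall>h\<in>M. \<forall>h'\<in>M. teq2 s s M M {} (D (h + h')) (D h + D h'))
    \<and> (\<forall>r. \<forall>h\<in>M. teq2 s s M M {} (D (s r h)) (fscale r (D h)))
    \<and> (\<forall>h\<in>M. \<forall>h'\<in>M. e (h + h') = e h + e h')
    \<and> (\<forall>r. \<forall>h\<in>M. e (s r h) = r * e h)
    \<and> (\<forall>h\<in>M. teq3 s s s M M M (tsum fscale (D h) (\<lambda>p. tl3 (D (fst p)) (snd p)))
                                 (tsum fscale (D h) (\<lambda>p. tr3 (fst p) (D (snd p)))))
    \<and> (\<forall>h\<in>M. tsum s (D h) (\<lambda>p. s (e (fst p)) (snd p)) = h)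
    \<and> (\<forall>h\<in>M. tsum s (D h) (\<lambda>p. s (e (snd p)) (fst p)) = h)"

definition kcomod :: "('k::comm_ring_1 \<Rightarrow> 'h::ab_group_add \<Rightarrow> 'h) \<Rightarrow> 'h set
   \<Rightarrow> ('h \<Rightarrow> 'h \<times> 'h \<Rightarrow> 'k) \<Rightarrow> ('h \<Rightarrow> 'k)
   \<Rightarrow> ('k \<Rightarrow> 'a::ab_group_add \<Rightarrow> 'a) \<Rightarrow> 'a set \<Rightarrow> ('a \<Rightarrow> 'a \<times> 'h \<Rightarrow> 'k) \<Rightarrow> bool" where
  "kcomod sH M D e sA N rho \<longleftrightarrow>
      (\<forall>a\<in>N. trep2 N M (rho a))
    \<and> (\<forall>a\<in>N. \<forall>a'\<in>N. teq2 sA sH N M {} (rho (a + a')) (rho a + rho a'))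
    \<and> (\<forall>r. \<forall>a\<in>N. teq2 sA sH N M {} (rho (sA r a)) (fscale r (rho a)))
    \<and> (\<forall>a\<in>N. teq3 sA sH sH N M M (tsum fscale (rho a) (\<lambda>p. tl3 (rho (fst p)) (snd p)))
                                   (tsum fscale (rho a) (\<lambda>p. tr3 (fst p) (D (snd p)))))
    \<and> (\<forall>a\<in>N. tsum sA (rho a) (\<lambda>p. sA (e (snd p)) (fst p)) = a)"

definition semi_hopf_cat :: "('k::comm_ring_1 \<Rightarrow> 'h::ab_group_add \<Rightarrow> 'h) \<Rightarrow> ('x \<Rightarrow> 'x \<Rightarrow> 'h set)
   \<Rightarrow> ('x \<Rightarrow> 'x \<Rightarrow> 'x \<Rightarrow> 'h \<Rightarrow> 'h \<Rightarrow> 'h) \<Rightarrow> ('x \<Rightarrow> 'h)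
   \<Rightarrow> ('x \<Rightarrow> 'x \<Rightarrow> 'h \<Rightarrow> 'h \<times> 'h \<Rightarrow> 'k) \<Rightarrow> ('x \<Rightarrow> 'x \<Rightarrow> 'h \<Rightarrow> 'k) \<Rightarrow> bool" where
  "semi_hopf_cat sH H mH uH DH eH \<longleftrightarrow> klin_cat sH H mH uH
    \<and> (\<forall>x y. kcoalg sH (H x y) (DH x y) (eH x y))
    \<and> (\<forall>x y z. \<forall>h\<in>H x y. \<forall>h'\<in>H y z.
         teq2 sH sH (H x z) (H x z) {} (DH x z (mH x y z h h'))
           (tsum fscale (DH x y h) (\<lambda>p. tsum fscale (DH y z h')
              (\<lambda>q. sing (mH x y z (fst p) (fst q), mH x y z (snd p) (snd q))))))
    \<and> (\<forall>x. teq2 sH sH (H x x) (H x x) {} (DH x x (uH x)) (sing (uH x, uH x)))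
    \<and> (\<forall>x y z. \<forall>h\<in>H x y. \<forall>h'\<in>H y z. eH x z (mH x y z h h') = eH x y h * eH y z h')
    \<and> (\<forall>x. eH x x (uH x) = 1)"

definition comodule_cat :: "('k::comm_ring_1 \<Rightarrow> 'h::ab_group_add \<Rightarrow> 'h) \<Rightarrow> ('x \<Rightarrow> 'x \<Rightarrow> 'h set)
   \<Rightarrow> ('x \<Rightarrow> 'x \<Rightarrow> 'x \<Rightarrow> 'h \<Rightarrow> 'h \<Rightarrow> 'h) \<Rightarrow> ('x \<Rightarrow> 'h)
   \<Rightarrow> ('x \<Rightarrow> 'x \<Rightarrow> 'h \<Rightarrow> 'h \<times> 'h \<Rightarrow> 'k) \<Rightarrow> ('x \<Rightarrow> 'x \<Rightarrow> 'h \<Rightarrow> 'k)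
   \<Rightarrow> ('k \<Rightarrow> 'a::ab_group_add \<Rightarrow> 'a) \<Rightarrow> ('x \<Rightarrow> 'x \<Rightarrow> 'a set)
   \<Rightarrow> ('x \<Rightarrow> 'x \<Rightarrow> 'x \<Rightarrow> 'a \<Rightarrow> 'a \<Rightarrow> 'a) \<Rightarrow> ('x \<Rightarrow> 'a)
   \<Rightarrow> ('x \<Rightarrow> 'x \<Rightarrow> 'a \<Rightarrow> 'a \<times> 'h \<Rightarrow> 'k) \<Rightarrow> bool" where
  "comodule_cat sH H mH uH DH eH sA A mA uA rho \<longleftrightarrow> klin_cat sA A mA uA
    \<and> (\<forall>x y. kcomod sH (H x y) (DH x y) (eH x y) sA (A x y) (rho x y))
    \<and> (\<forall>x y z. \<forall>a\<in>A x y. \<forall>b\<in>A y z.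
         teq2 sA sH (A x z) (H x z) {} (rho x z (mA x y z a b))
           (tsum fscale (rho x y a) (\<lambda>p. tsum fscale (rho y z b)
              (\<lambda>q. sing (mA x y z (fst p) (fst q), mH x y z (snd p) (snd q))))))
    \<and> (\<forall>x. teq2 sA sH (A x x) (H x x) {} (rho x x (uA x)) (sing (uA x, uH x)))"

definition coinv :: "('k::comm_ring_1 \<Rightarrow> 'h::ab_group_add \<Rightarrow> 'h) \<Rightarrow> ('x \<Rightarrow> 'x \<Rightarrow> 'h set) \<Rightarrow> ('x \<Rightarrow> 'h)
   \<Rightarrow> ('k \<Rightarrow> 'a::ab_group_add \<Rightarrow> 'a) \<Rightarrow> ('x \<Rightarrow> 'x \<Rightarrow> 'a set)
   \<Rightarrow> ('x \<Rightarrow> 'x \<Rightarrow> 'a \<Rightarrow> 'a \<times> 'h \<Rightarrow> 'k) \<Rightarrow> 'x \<Rightarrow> 'a set" where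
  "coinv sH H uH sA A rho x = {a \<in> A x x. teq2 sA sH (A x x) (H x x) {} (rho x x a) (sing (a, uH x))}"

text \<open>Identifications making A_zx \<otimes> A_xy into A_zx \<otimes>_{B_x} A_xy.\<close>
definition balB :: "('x \<Rightarrow> 'x \<Rightarrow> 'a set) \<Rightarrow> ('x \<Rightarrow> 'x \<Rightarrow> 'x \<Rightarrow> 'a \<Rightarrow> 'a \<Rightarrow> 'a) \<Rightarrow> 'a set
   \<Rightarrow> 'x \<Rightarrow> 'x \<Rightarrow> 'x \<Rightarrow> (('a \<times> 'a) \<times> ('a \<times> 'a)) set" where
  "balB A mA B z x y = {((mA z x x a b, a'), (a, mA x x y b a')) | a b a'. a \<in> A z x \<and> b \<in> B \<and> a' \<in> A x y}"

text \<open>can^z_{xy}(a \<otimes> a') = a a'_[0] \<otimes> a'_[1], on representatives.\<close>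
definition can :: "('x \<Rightarrow> 'x \<Rightarrow> 'x \<Rightarrow> 'a \<Rightarrow> 'a \<Rightarrow> 'a) \<Rightarrow> ('x \<Rightarrow> 'x \<Rightarrow> 'a \<Rightarrow> 'a \<times> 'h \<Rightarrow> 'k::comm_ring_1)
   \<Rightarrow> 'x \<Rightarrow> 'x \<Rightarrow> 'x \<Rightarrow> ('a \<times> 'a \<Rightarrow> 'k) \<Rightarrow> 'a \<times> 'h \<Rightarrow> 'k" where
  "can mA rho z x y f = tsum fscale f (\<lambda>p. tsum fscale (rho x y (snd p))
       (\<lambda>q. sing (mA z x y (fst p) (fst q), snd q)))"

definition galois_ext :: "('k::comm_ring_1 \<Rightarrow> 'h::ab_group_add \<Rightarrow> 'h) \<Rightarrow> ('x \<Rightarrow> 'x \<Rightarrow> 'h set) \<Rightarrow> ('x \<Rightarrow> 'h)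
   \<Rightarrow> ('k \<Rightarrow> 'a::ab_group_add \<Rightarrow> 'a) \<Rightarrow> ('x \<Rightarrow> 'x \<Rightarrow> 'a set)
   \<Rightarrow> ('x \<Rightarrow> 'x \<Rightarrow> 'x \<Rightarrow> 'a \<Rightarrow> 'a \<Rightarrow> 'a) \<Rightarrow> ('x \<Rightarrow> 'x \<Rightarrow> 'a \<Rightarrow> 'a \<times> 'h \<Rightarrow> 'k) \<Rightarrow> bool" where
  "galois_ext sH H uH sA A mA rho \<longleftrightarrow> (\<forall>x y z.
      (\<forall>f g. trep2 (A z x) (A x y) f \<and> trep2 (A z x) (A x y) g
         \<and> teq2 sA sH (A z y) (H x y) {} (can mA rho z x y f) (can mA rho z x y g)
         \<longrightarrow> teq2 sA sA (A z x) (A x y) (balB A mA (coinv sH H uH sA A rho x) z x y) f g)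
    \<and> (\<forall>t. trep2 (A z y) (H x y) t \<longrightarrow>
         (\<exists>f. trep2 (A z x) (A x y) f \<and> teq2 sA sH (A z y) (H x y) {} (can mA rho z x y f) t)))"

definition bhom :: "('k::comm_ring_1 \<Rightarrow> 'h::ab_group_add \<Rightarrow> 'h) \<Rightarrow> ('x \<Rightarrow> 'x \<Rightarrow> 'h set) \<Rightarrow> ('x \<Rightarrow> 'h)
   \<Rightarrow> ('k \<Rightarrow> 'a::ab_group_add \<Rightarrow> 'a) \<Rightarrow> ('x \<Rightarrow> 'x \<Rightarrow> 'a set)
   \<Rightarrow> ('x \<Rightarrow> 'x \<Rightarrow> 'x \<Rightarrow> 'a \<Rightarrow> 'a \<Rightarrow> 'a) \<Rightarrow> ('x \<Rightarrow> 'x \<Rightarrow> 'a \<Rightarrow> 'a \<times> 'h \<Rightarrow> 'k)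
   \<Rightarrow> 'x \<Rightarrow> 'x \<Rightarrow> 'x \<Rightarrow> ('a \<Rightarrow> 'a) set" where
  "bhom sH H uH sA A mA rho x z y = {\<phi> \<in> khom sA sA (A x z) (A x y).
      \<forall>b\<in>coinv sH H uH sA A rho x. \<forall>a\<in>A x z. \<phi> (mA x x z b a) = mA x x y b (\<phi> a)}"

definition delta :: "('k::comm_ring_1 \<Rightarrow> 'a::ab_group_add \<Rightarrow> 'a) \<Rightarrow> ('x \<Rightarrow> 'x \<Rightarrow> 'a set)
   \<Rightarrow> ('x \<Rightarrow> 'x \<Rightarrow> 'x \<Rightarrow> 'a \<Rightarrow> 'a \<Rightarrow> 'a) \<Rightarrow> ('x \<Rightarrow> 'x \<Rightarrow> 'a \<Rightarrow> 'a \<times> 'h \<Rightarrow> 'k)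
   \<Rightarrow> 'x \<Rightarrow> 'x \<Rightarrow> 'x \<Rightarrow> ('h \<Rightarrow> 'a) \<Rightarrow> 'a \<Rightarrow> 'a" where
  "delta sA A mA rho x y z g = (\<lambda>a. if a \<in> A x z
      then tsum sA (rho x z a) (\<lambda>p. mA x z y (fst p) (g (snd p))) else 0)"

text \<open>Koppinen product: for g in C^x_{yz}, g' in C^x_{zu}, h in H_xu:
  (g#g')(h) = g'(h_(2))_[0] g(h_(1) g'(h_(2))_[1]).\<close>
definition kop :: "('k::comm_ring_1 \<Rightarrow> 'a::ab_group_add \<Rightarrow> 'a) \<Rightarrow> ('x \<Rightarrow> 'x \<Rightarrow> 'h set)
   \<Rightarrow> ('x \<Rightarrow> 'x \<Rightarrow> 'x \<Rightarrow> 'h \<Rightarrow> 'h \<Rightarrow> 'h) \<Rightarrow> ('x \<Rightarrow> 'x \<Rightarrow> 'h \<Rightarrow> 'h \<times> 'h \<Rightarrow> 'k)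
   \<Rightarrow> ('x \<Rightarrow> 'x \<Rightarrow> 'x \<Rightarrow> 'a \<Rightarrow> 'a \<Rightarrow> 'a) \<Rightarrow> ('x \<Rightarrow> 'x \<Rightarrow> 'a \<Rightarrow> 'a \<times> 'h \<Rightarrow> 'k)
   \<Rightarrow> 'x \<Rightarrow> 'x \<Rightarrow> 'x \<Rightarrow> 'x \<Rightarrow> ('h \<Rightarrow> 'a) \<Rightarrow> ('h \<Rightarrow> 'a) \<Rightarrow> 'h \<Rightarrow> 'a" where
  "kop sA H mH DH mA rho x y z u g g' = (\<lambda>h. if h \<in> H x u
      then tsum sA (DH x u h) (\<lambda>p. tsum sA (rho u z (g' (snd p)))
             (\<lambda>q. mA u z y (fst q) (g (mH x u z (fst p) (snd q)))))
      else 0)"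

text \<open>Unit of the Koppinen cluster: i^x_y(h) = eps_xy(h) 1_y.\<close>
definition kunit :: "('k::comm_ring_1 \<Rightarrow> 'a::ab_group_add \<Rightarrow> 'a) \<Rightarrow> ('x \<Rightarrow> 'x \<Rightarrow> 'h set)
   \<Rightarrow> ('x \<Rightarrow> 'x \<Rightarrow> 'h \<Rightarrow> 'k) \<Rightarrow> ('x \<Rightarrow> 'a) \<Rightarrow> 'x \<Rightarrow> 'x \<Rightarrow> 'h \<Rightarrow> 'a" where
  "kunit sA H eH uA x y = (\<lambda>h. if h \<in> H x y then sA (eH x y h) (uA y) else 0)"

end

theory Submission
  imports Defs
begin

lemma module_fscale: "module (fscale :: 'k::comm_ring_1 \<Rightarrow> ('p \<Rightarrow> 'k) \<Rightarrow> ('p \<Rightarrow> 'k))"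
  by unfold_locales (auto simp: fscale_def fun_eq_iff algebra_simps)

lemma fsupp_add: "fsupp (f + g :: _ \<Rightarrow> 'k::ab_group_add) \<subseteq> fsupp f \<union> fsupp g"
  by (auto simp: fsupp_def)
lemma fsupp_diff: "fsupp (f - g :: _ \<Rightarrow> 'k::ab_group_add) \<subseteq> fsupp f \<union> fsupp g"
  by (auto simp: fsupp_def)
lemma fsupp_uminus: "fsupp (- f :: _ \<Rightarrow> 'k::ab_group_add) = fsupp f"
  by (auto simp: fsupp_def)
lemma fsupp_fscale: "fsupp (fscale r f :: _ \<Rightarrow> 'k::comm_ring_1) \<subseteq> fsupp f"
  by (auto simp: fsupp_def fscale_def)
lemma fsupp_sing: "fsupp (sing p :: _ \<Rightarrow> 'k::{zero,one}) \<subseteq> {p}"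
  by (auto simp: fsupp_def sing_def)
lemma fsupp_zero[simp]: "fsupp 0 = {}"
  by (auto simp: fsupp_def)

lemma tsum_superset:
  assumes "module s" "finite S" "fsupp f \<subseteq> S"
  shows "tsum s f F = (\<Sum>p\<in>S. s (f p) (F p))"
  unfolding tsum_def
  by (rule sum.mono_neutral_left) (use assms in \<open>auto simp: fsupp_def module.scale_zero_left\<close>)

lemma tsum_add:
  assumes "module s" "finite (fsupp f)" "finite (fsupp g)"
  shows "tsum s (f + g) F = tsum s f F + tsum s g F"
proof -
  let ?S = "fsupp f \<union> fsupp g"
  have "tsum s (f + g) F = (\<Sum>p\<in>?S. s ((f+g) p) (F p))"
    using assms fsupp_add[of f g] by (intro tsum_superset) auto
  also have "\<dots> = (\<Sum>p\<in>?S. s (f p) (F p)) + (\<Sum>p\<in>?S. s (g p) (F p))"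
    by (simp add: module.scale_left_distrib[OF assms(1)] sum.distrib)
  also have "\<dots> = tsum s f F + tsum s g F"
    using assms by (simp add: tsum_superset[of s "fsupp f \<union> fsupp g"])
  finally show ?thesis .
qed

lemma tsum_fscale:
  assumes "module s" "finite (fsupp f)"
  shows "tsum s (fscale r f) F = s r (tsum s f F)"
proof -
  have "tsum s (fscale r f) F = (\<Sum>p\<in>fsupp f. s (fscale r f p) (F p))"
    using assms fsupp_fscale[of r f] by (intro tsum_superset) auto
  also have "\<dots> = s r (tsum s f F)"
    by (simp add: tsum_def module.scale_sum_right[OF assms(1)] fscale_def module.scale_scale[OF assms(1)])
  finally show ?thesis .
qed

lemma tsum_uminus:
  assumes "module s"
  shows "tsum s (- f) F = - tsum s f F"
  by (simp add: tsum_def fsupp_uminus module.scale_minus_left[OF assms] sum_negf)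

lemma tsum_diff:
  assumes "module s" "finite (fsupp f)" "finite (fsupp g)"
  shows "tsum s (f - g) F = tsum s f F - tsum s g F"
  using tsum_add[OF assms(1,2), of "- g" F] assms by (simp add: fsupp_uminus tsum_uminus)

lemma tsum_zero[simp]: "tsum s 0 F = 0"
  by (simp add: tsum_def)

lemma tsum_sing:
  assumes "module s"
  shows "tsum s (sing p) F = F p"
proof -
  have "tsum s (sing p) F = (\<Sum>q\<in>{p}. s (sing p q) (F q))"
    using assms fsupp_sing[of p] by (intro tsum_superset) auto
  then show ?thesis by (simp add: sing_def module.scale_one[OF assms])
qed

lemma tsum_cong:
  "(\<And>p. p \<in> fsupp f \<Longrightarrow> F p = G p) \<Longrightarrow> tsum s f F = tsum s f G"
  unfolding tsum_def by (rule sum.cong) auto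

lemma tsum_cong2:
  "f = f' \<Longrightarrow> (\<And>p. p \<in> fsupp f' \<Longrightarrow> F p = G p) \<Longrightarrow> tsum s f F = tsum s f' G"
  unfolding tsum_def by (rule sum.cong) auto

lemma tsum_F_add:
  assumes "module s"
  shows "tsum s f (\<lambda>p. F p + G p) = tsum s f F + tsum s f G"
  by (simp add: tsum_def module.scale_right_distrib[OF assms] sum.distrib)

lemma tsum_F_diff:
  assumes "module s"
  shows "tsum s f (\<lambda>p. F p - G p) = tsum s f F - tsum s f G"
  by (simp add: tsum_def module.scale_right_diff_distrib[OF assms] sum_subtractf)

lemma tsum_F_scale:
  assumes "module s"
  shows "tsum s f (\<lambda>p. s r (F p)) = s r (tsum s f F)"
  by (simp add: tsum_def module.scale_sum_right[OF assms] module.scale_scale[OF assms] mult.commute)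

lemma tsum_F_zero:
  assumes "module s"
  shows "tsum s f (\<lambda>p. 0) = 0"
  by (simp add: tsum_def module.scale_zero_right[OF assms])

lemma tsum_in_subspace:
  assumes "module s" "module.subspace s V" "\<And>p. p \<in> fsupp f \<Longrightarrow> F p \<in> V"
  shows "tsum s f F \<in> V"
  unfolding tsum_def using assms
  by (intro module.subspace_sum[OF assms(1,2)] module.subspace_scale[OF assms(1,2)]) auto

lemma lin_sum:
  assumes "finite S" "\<And>p. p \<in> S \<Longrightarrow> G p \<in> V" "module.subspace s V"  "module s"
    "\<And>a b. a \<in> V \<Longrightarrow> b \<in> V \<Longrightarrow> L (a + b) = L a + L b"
    "\<And>a. a \<in> V \<Longrightarrow> L (s 0 a) = s' 0 (L a)" "module s'"
  shows "L (\<Sum>p\<in>S. G p) = (\<Sum>p\<in>S. L (G p))"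
  using assms(1,2)
proof (induction S rule: finite_induct)
  case empty
  have "0 \<in> V" using module.subspace_0[OF assms(4,3)] .
  then have "L (s 0 0) = s' 0 (L 0)" using assms(6) by blast
  then show ?case by (simp add: module.scale_zero_left[OF assms(4)] module.scale_zero_left[OF assms(7)])
next
  case (insert x F)
  have "sum G F \<in> V" using insert by (intro module.subspace_sum[OF assms(4,3)]) auto
  then show ?case using insert assms(5) by simp
qed

lemma tsum_linear:
  assumes "module s" "module s'" "module.subspace s V" "\<And>p. p \<in> fsupp f \<Longrightarrow> G p \<in> V"
    "\<And>a b. a \<in> V \<Longrightarrow> b \<in> V \<Longrightarrow> L (a + b) = L a + L b"
    "\<And>r a. a \<in> V \<Longrightarrow> L (s r a) = s' r (L a)"
  shows "L (tsum s f G) = tsum s' f (\<lambda>p. L (G p))"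
  unfolding tsum_def
proof (cases "finite (fsupp f)")
  case True
  have "L (\<Sum>p\<in>fsupp f. s (f p) (G p)) = (\<Sum>p\<in>fsupp f. L (s (f p) (G p)))"
    by (rule lin_sum[where V=V and s=s and s'=s']) (use assms True in \<open>auto intro: module.subspace_scale\<close>)
  then show "L (\<Sum>p\<in>fsupp f. s (f p) (G p)) = (\<Sum>p\<in>fsupp f. s' (f p) (L (G p)))"
    using assms by simp
next
  case False
  have "0 \<in> V" using module.subspace_0[OF assms(1,3)] .
  then have "L (s 0 0) = s' 0 (L 0)" using assms(6) by blast
  then show "L (\<Sum>p\<in>fsupp f. s (f p) (G p)) = (\<Sum>p\<in>fsupp f. s' (f p) (L (G p)))"
    using False by (simp add: module.scale_zero_left[OF assms(1)] module.scale_zero_left[OF assms(2)])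
qed

lemma fsupp_sum: "fsupp (\<Sum>a\<in>S. H a :: _ \<Rightarrow> 'k::ab_group_add) \<subseteq> (\<Union>a\<in>S. fsupp (H a))"
  by (induction S rule: infinite_finite_induct) (auto simp: fsupp_def)

lemma tsum_sumf:
  assumes "module s" "finite S" "\<And>a. a \<in> S \<Longrightarrow> finite (fsupp (H a))"
  shows "tsum s (\<Sum>a\<in>S. H a) F = (\<Sum>a\<in>S. tsum s (H a) F)"
  using assms(2,3)
proof (induction S rule: finite_induct)
  case (insert x S)
  have "finite (fsupp (\<Sum>a\<in>S. H a))"
    by (rule finite_subset[OF fsupp_sum]) (use insert in auto)
  have "tsum s (sum H (insert x S)) F = tsum s (H x + sum H S) F"
    by (rule arg_cong[where f="\<lambda>g. tsum s g F"], rule sum.insert[OF insert(1,2)])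
  also have "\<dots> = tsum s (H x) F + tsum s (sum H S) F"
    by (rule tsum_add[OF assms(1)]) (use insert \<open>finite (fsupp (\<Sum>a\<in>S. H a))\<close> in auto)
  also have "\<dots> = tsum s (H x) F + (\<Sum>a\<in>S. tsum s (H a) F)"
    using insert by simp
  also have "\<dots> = (\<Sum>a\<in>insert x S. tsum s (H a) F)"
    using insert by simp
  finally show ?case .
qed simp

lemma tsum_fscale_eq: "tsum fscale f G = (\<Sum>p\<in>fsupp f. fscale (f p) (G p))"
  unfolding tsum_def by (rule refl)

lemma fsupp_tsum_fscale: "fsupp (tsum fscale f G :: _ \<Rightarrow> 'k::comm_ring_1) \<subseteq> (\<Union>p\<in>fsupp f. fsupp (G p))"
  unfolding tsum_fscale_eq
  by (rule order_trans[OF fsupp_sum], rule UN_mono[OF order_refl fsupp_fscale])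

lemma finite_fsupp_tsum_fscale:
  assumes "finite (fsupp f)" "\<And>p. p \<in> fsupp f \<Longrightarrow> finite (fsupp (G p))"
  shows "finite (fsupp (tsum fscale f G :: _ \<Rightarrow> 'k::comm_ring_1))"
  using fsupp_tsum_fscale[of f G] assms by (meson finite_UN_I finite_subset)

lemma tsum_tsum:
  assumes "module s" "finite (fsupp f)" "\<And>p. p \<in> fsupp f \<Longrightarrow> finite (fsupp (G p))"
  shows "tsum s (tsum fscale f G :: _ \<Rightarrow> 'k::comm_ring_1) F = tsum s f (\<lambda>p. tsum s (G p) F)"
proof -
  have "tsum s (tsum fscale f G) F = (\<Sum>p\<in>fsupp f. tsum s (fscale (f p) (G p)) F)"
    unfolding tsum_fscale_eq using assms
    by (intro tsum_sumf) (auto intro: finite_subset[OF fsupp_fscale])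
  also have "\<dots> = tsum s f (\<lambda>p. tsum s (G p) F)"
    unfolding tsum_def[of s f] using assms by (intro sum.cong) (auto simp: tsum_fscale)
  finally show ?thesis .
qed

lemma span_eval:
  assumes "module s" "module.subspace s V" "f \<in> fspan R"
    "\<And>r. r \<in> R \<Longrightarrow> finite (fsupp r) \<and> tsum s r F \<in> V"
  shows "finite (fsupp (f :: _ \<Rightarrow> 'k::comm_ring_1)) \<and> tsum s f F \<in> V"
proof -
  interpret fs: module "fscale :: 'k \<Rightarrow> _" by (rule module_fscale)
  have "f \<in> {f. finite (fsupp f) \<and> tsum s f F \<in> V}"
    using assms(3) unfolding fspan_def
  proof (rule fs.span_subspace_induct)
    show "fs.subspace {f. finite (fsupp f) \<and> tsum s f F \<in> V}"
    proof (rule fs.subspaceI)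
      show "0 \<in> {f. finite (fsupp f) \<and> tsum s f F \<in> V}"
        using module.subspace_0[OF assms(1,2)] by simp
    next
      fix x y :: "_ \<Rightarrow> 'k"
      assume "x \<in> {f. finite (fsupp f) \<and> tsum s f F \<in> V}" "y \<in> {f. finite (fsupp f) \<and> tsum s f F \<in> V}"
      then have fx: "finite (fsupp x)" "tsum s x F \<in> V" and fy: "finite (fsupp y)" "tsum s y F \<in> V" by auto
      have "finite (fsupp (x + y))" by (rule finite_subset[OF fsupp_add]) (use fx fy in blast)
      moreover have "tsum s (x + y) F \<in> V"
        unfolding tsum_add[OF assms(1) fx(1) fy(1)] by (rule module.subspace_add[OF assms(1,2) fx(2) fy(2)])
      ultimately show "x + y \<in> {f. finite (fsupp f) \<and> tsum s f F \<in> V}" by blast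
    next
      fix c and x :: "_ \<Rightarrow> 'k"
      assume "x \<in> {f. finite (fsupp f) \<and> tsum s f F \<in> V}"
      then have fx: "finite (fsupp x)" "tsum s x F \<in> V" by auto
      have "finite (fsupp (fscale c x))" by (rule finite_subset[OF fsupp_fscale]) (use fx in blast)
      moreover have "tsum s (fscale c x) F \<in> V"
        unfolding tsum_fscale[OF assms(1) fx(1)] by (rule module.subspace_scale[OF assms(1,2) fx(2)])
      ultimately show "fscale c x \<in> {f. finite (fsupp f) \<and> tsum s f F \<in> V}" by blast
    qed
  next
    fix r assume "r \<in> R" then show "r \<in> {f. finite (fsupp f) \<and> tsum s f F \<in> V}"
      using assms(4) by blast
  qed
  then show ?thesis by simp
qed



lemma trep2_add: "trep2 M N f \<Longrightarrow> trep2 M N g \<Longrightarrow> trep2 M N (f + g :: _ \<Rightarrow> 'k::ab_group_add)"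
  unfolding trep2_def by (meson Un_least finite_UnI finite_subset fsupp_add order_trans)
lemma trep2_diff: "trep2 M N f \<Longrightarrow> trep2 M N g \<Longrightarrow> trep2 M N (f - g :: _ \<Rightarrow> 'k::ab_group_add)"
  unfolding trep2_def by (meson Un_least finite_UnI finite_subset fsupp_diff order_trans)
lemma trep2_fscale: "trep2 M N f \<Longrightarrow> trep2 M N (fscale r f :: _ \<Rightarrow> 'k::comm_ring_1)"
  unfolding trep2_def by (meson finite_subset fsupp_fscale order_trans)
lemma trep2_sing: "m \<in> M \<Longrightarrow> n \<in> N \<Longrightarrow> trep2 M N (sing (m, n) :: _ \<Rightarrow> 'k::{zero,one})"
  unfolding trep2_def using fsupp_sing[of "(m,n)"] by (auto intro: finite_subset)
lemma trep2_zero: "trep2 M N 0"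
  unfolding trep2_def by simp
lemma trep2_tsum:
  assumes "finite (fsupp f)" "\<And>p. p \<in> fsupp f \<Longrightarrow> trep2 M N (G p)"
  shows "trep2 M N (tsum fscale f G :: _ \<Rightarrow> 'k::comm_ring_1)"
  unfolding trep2_def
proof
  show "finite (fsupp (tsum fscale f G))"
    by (rule finite_fsupp_tsum_fscale) (use assms in \<open>auto simp: trep2_def\<close>)
  show "fsupp (tsum fscale f G) \<subseteq> M \<times> N"
    by (rule order_trans[OF fsupp_tsum_fscale]) (use assms in \<open>auto simp: trep2_def\<close>)
qed

lemma fspan_add: "a \<in> fspan R \<Longrightarrow> b \<in> fspan R \<Longrightarrow> a + b \<in> fspan (R :: (_ \<Rightarrow> 'k::comm_ring_1) set)"
  unfolding fspan_def by (rule module.span_add[OF module_fscale])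
lemma fspan_diff: "a \<in> fspan R \<Longrightarrow> b \<in> fspan R \<Longrightarrow> a - b \<in> fspan (R :: (_ \<Rightarrow> 'k::comm_ring_1) set)"
  unfolding fspan_def by (rule module.span_diff[OF module_fscale])
lemma fspan_neg: "a \<in> fspan R \<Longrightarrow> - a \<in> fspan (R :: (_ \<Rightarrow> 'k::comm_ring_1) set)"
  unfolding fspan_def by (rule module.span_neg[OF module_fscale])
lemma fspan_scale: "a \<in> fspan R \<Longrightarrow> fscale r a \<in> fspan (R :: (_ \<Rightarrow> 'k::comm_ring_1) set)"
  unfolding fspan_def by (rule module.span_scale[OF module_fscale])
lemma fspan_zero: "0 \<in> fspan (R :: (_ \<Rightarrow> 'k::comm_ring_1) set)"
  unfolding fspan_def by (rule module.span_zero[OF module_fscale])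
lemma fspan_base: "a \<in> R \<Longrightarrow> a \<in> fspan (R :: (_ \<Rightarrow> 'k::comm_ring_1) set)"
  unfolding fspan_def by (rule module.span_base[OF module_fscale])
lemma fspan_subspace: "module.subspace fscale (fspan (R :: (_ \<Rightarrow> 'k::comm_ring_1) set))"
  unfolding fspan_def by (rule module.subspace_span[OF module_fscale])

lemma fscale_diff: "fscale r (a - b) = fscale r a - fscale r (b :: _ \<Rightarrow> 'k::comm_ring_1)"
  by (simp add: fscale_def fun_eq_iff algebra_simps)

lemma teq2_refl: "trep2 M N f \<Longrightarrow> teq2 sM sN M N Bal f f"
  unfolding teq2_def by (simp add: fspan_zero)
lemma teq2_sym: "teq2 sM sN M N Bal f g \<Longrightarrow> teq2 sM sN M N Bal g f"
  unfolding teq2_def using fspan_neg by fastforce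
lemma teq2_trans: "teq2 sM sN M N Bal f g \<Longrightarrow> teq2 sM sN M N Bal g h \<Longrightarrow> teq2 sM sN M N Bal f h"
  unfolding teq2_def using fspan_add by fastforce
lemma teq2_add: "teq2 sM sN M N Bal f g \<Longrightarrow> teq2 sM sN M N Bal f' g' \<Longrightarrow> teq2 sM sN M N Bal (f + f') (g + g')"
  unfolding teq2_def using fspan_add[of "f - g" _ "f' - g'"]
  by (auto intro: trep2_add simp: algebra_simps)
lemma teq2_fscale: "teq2 sM sN M N Bal f g \<Longrightarrow> teq2 sM sN M N Bal (fscale r f) (fscale r g)"
  unfolding teq2_def using fspan_scale[of "f - g" _ r]
  by (auto intro: trep2_fscale simp: fscale_diff)

lemma tsum_fscale_diff:
  "finite (fsupp f) \<Longrightarrow> tsum fscale f X - tsum fscale f Y = tsum fscale f (\<lambda>p. X p - Y p :: _ \<Rightarrow> 'k::comm_ring_1)"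
  using tsum_F_diff[OF module_fscale, of f X Y] by simp

lemma teq2_tsum:
  assumes "finite (fsupp f)" "\<And>p. p \<in> fsupp f \<Longrightarrow> teq2 sM sN M N Bal (X p) (Y p)"
  shows "teq2 sM sN M N Bal (tsum fscale f X) (tsum fscale f Y :: _ \<Rightarrow> 'k::comm_ring_1)"
  unfolding teq2_def
proof (intro conjI)
  show "trep2 M N (tsum fscale f X)" "trep2 M N (tsum fscale f Y)"
    using assms by (auto intro!: trep2_tsum simp: teq2_def)
  have "tsum fscale f (\<lambda>p. X p - Y p) \<in> fspan (rels2 sM sN M N Bal)"
    by (rule tsum_in_subspace[OF module_fscale fspan_subspace]) (use assms in \<open>auto simp: teq2_def\<close>)
  then show "tsum fscale f X - tsum fscale f Y \<in> fspan (rels2 sM sN M N Bal)"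
    unfolding tsum_fscale_diff[OF assms(1)] .
qed

lemma teq2_relR_add:
  "m \<in> M \<Longrightarrow> n \<in> N \<Longrightarrow> n' \<in> N \<Longrightarrow> n + n' \<in> N \<Longrightarrow> teq2 sM sN M N Bal (sing (m, n + n')) (sing (m, n) + sing (m, n') :: _ \<Rightarrow> 'k::comm_ring_1)"
  unfolding teq2_def
  by (auto intro!: trep2_add trep2_sing fspan_base simp: rels2_def diff_add_eq_diff_diff_swap)

lemma teq2_relR_scale:
  "m \<in> M \<Longrightarrow> n \<in> N \<Longrightarrow> sN r n \<in> N \<Longrightarrow> teq2 sM sN M N Bal (sing (m, sN r n)) (fscale r (sing (m, n)) :: _ \<Rightarrow> 'k::comm_ring_1)"
  unfolding teq2_def
  by (auto intro!: trep2_fscale trep2_sing fspan_base simp: rels2_def)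



lemma finite_fsupp_sing: "finite (fsupp (sing p :: _ \<Rightarrow> 'k::{zero,one}))"
  using fsupp_sing[of p] by (rule finite_subset) simp

lemma finite_fsupp_diff: "finite (fsupp f) \<Longrightarrow> finite (fsupp g) \<Longrightarrow> finite (fsupp (f - g :: _ \<Rightarrow> 'k::ab_group_add))"
  by (rule finite_subset[OF fsupp_diff]) auto
lemma finite_fsupp_fscale: "finite (fsupp f) \<Longrightarrow> finite (fsupp (fscale r f :: _ \<Rightarrow> 'k::comm_ring_1))"
  by (rule finite_subset[OF fsupp_fscale])

lemma tsum_rel3:
  assumes "module s"
  shows "tsum s (sing a - sing b - sing c :: _ \<Rightarrow> 'k::comm_ring_1) F = F a - F b - F c"
  by (simp add: tsum_diff[OF assms] finite_fsupp_diff finite_fsupp_sing tsum_sing[OF assms])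
lemma tsum_relS:
  assumes "module s"
  shows "tsum s (sing a - fscale r (sing b) :: _ \<Rightarrow> 'k::comm_ring_1) F = F a - s r (F b)"
  by (simp add: tsum_diff[OF assms] finite_fsupp_fscale finite_fsupp_sing tsum_sing[OF assms] tsum_fscale[OF assms])
lemma tsum_relB:
  assumes "module s"
  shows "tsum s (sing a - sing b :: _ \<Rightarrow> 'k::comm_ring_1) F = F a - F b"
  by (simp add: tsum_diff[OF assms] finite_fsupp_sing tsum_sing[OF assms])

definition bilV where
  "bilV s sM sN M N Bal V F \<longleftrightarrow>
     (\<forall>m\<in>M. \<forall>m'\<in>M. \<forall>n\<in>N. F (m + m', n) - F (m, n) - F (m', n) \<in> V)
   \<and> (\<forall>m\<in>M. \<forall>n\<in>N. \<forall>n'\<in>N. F (m, n + n') - F (m, n) - F (m, n') \<in> V)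
   \<and> (\<forall>r. \<forall>m\<in>M. \<forall>n\<in>N. F (sM r m, n) - s r (F (m, n)) \<in> V)
   \<and> (\<forall>r. \<forall>m\<in>M. \<forall>n\<in>N. F (m, sN r n) - s r (F (m, n)) \<in> V)
   \<and> (\<forall>p q. (p, q) \<in> Bal \<longrightarrow> F p - F q \<in> V)"

lemma teq2_evalV:
  assumes "module s" "module.subspace s V" "teq2 sM sN M N Bal f g" "bilV s sM sN M N Bal V F"
  shows "tsum s f F - tsum s (g :: _ \<Rightarrow> 'k::comm_ring_1) F \<in> V"
proof -
  have fg: "f - g \<in> fspan (rels2 sM sN M N Bal)" and tf: "trep2 M N f" "trep2 M N g"
    using assms(3) by (auto simp: teq2_def)
  have "finite (fsupp (f - g)) \<and> tsum s (f - g) F \<in> V"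
  proof (rule span_eval[OF assms(1,2) fg])
    fix r assume "r \<in> rels2 sM sN M N Bal"
    then show "finite (fsupp r) \<and> tsum s r F \<in> V"
    proof (unfold rels2_def, elim UnE CollectE exE conjE)
      fix m m' n assume "r = sing (m + m', n) - sing (m, n) - sing (m', n)" "m \<in> M" "m' \<in> M" "n \<in> N"
      then show ?thesis using assms(4) unfolding bilV_def
        by (simp only: tsum_rel3[OF assms(1)] finite_fsupp_diff finite_fsupp_sing; (blast)?)
    next
      fix m n n' assume "r = sing (m, n + n') - sing (m, n) - sing (m, n')" "m \<in> M" "n \<in> N" "n' \<in> N"
      then show ?thesis using assms(4) unfolding bilV_def
        by (simp only: tsum_rel3[OF assms(1)] finite_fsupp_diff finite_fsupp_sing; (blast)?)
    next
      fix rr m n assume "r = sing (sM rr m, n) - fscale rr (sing (m, n))" "m \<in> M" "n \<in> N"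
      then show ?thesis using assms(4) unfolding bilV_def
        by (simp only: tsum_relS[OF assms(1)] finite_fsupp_diff finite_fsupp_fscale finite_fsupp_sing; (blast)?)
    next
      fix rr m n assume "r = sing (m, sN rr n) - fscale rr (sing (m, n))" "m \<in> M" "n \<in> N"
      then show ?thesis using assms(4) unfolding bilV_def
        by (simp only: tsum_relS[OF assms(1)] finite_fsupp_diff finite_fsupp_fscale finite_fsupp_sing; (blast)?)
    next
      fix p q assume "r = sing p - sing q" "(p, q) \<in> Bal"
      then show ?thesis using assms(4) unfolding bilV_def
        by (simp only: tsum_relB[OF assms(1)] finite_fsupp_diff finite_fsupp_sing; (blast)?)
    qed
  qed
  then show ?thesis
    using tf by (simp add: tsum_diff[OF assms(1)] trep2_def)
qed

lemma bilV0I: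
  fixes F :: "'a::ab_group_add \<times> 'b::ab_group_add \<Rightarrow> 'v::ab_group_add"
  assumes "\<And>m m' n. m \<in> M \<Longrightarrow> m' \<in> M \<Longrightarrow> n \<in> N \<Longrightarrow> F (m + m', n) = F (m, n) + F (m', n)"
    "\<And>m n n'. m \<in> M \<Longrightarrow> n \<in> N \<Longrightarrow> n' \<in> N \<Longrightarrow> F (m, n + n') = F (m, n) + F (m, n')"
    "\<And>r m n. m \<in> M \<Longrightarrow> n \<in> N \<Longrightarrow> F (sM r m, n) = s r (F (m, n))"
    "\<And>r m n. m \<in> M \<Longrightarrow> n \<in> N \<Longrightarrow> F (m, sN r n) = s r (F (m, n))"
    "\<And>p q. (p, q) \<in> Bal \<Longrightarrow> F p = F q"
  shows "bilV s sM sN M N Bal {0} F"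
  using assms unfolding bilV_def by (auto simp: algebra_simps)

lemma teq2_eval:
  assumes "module s" "teq2 sM sN M N Bal f g" "bilV s sM sN M N Bal {0} F"
  shows "tsum s f F = tsum s (g :: _ \<Rightarrow> 'k::comm_ring_1) F"
  using teq2_evalV[OF assms(1) module.subspace_single_0[OF assms(1)] assms(2,3)] by simp



definition tril where
  "tril s sM sN sP M N P F \<longleftrightarrow>
     (\<forall>m\<in>M. \<forall>m'\<in>M. \<forall>n\<in>N. \<forall>p\<in>P. F (m + m', n, p) = F (m, n, p) + F (m', n, p))
   \<and> (\<forall>m\<in>M. \<forall>n\<in>N. \<forall>n'\<in>N. \<forall>p\<in>P. F (m, n + n', p) = F (m, n, p) + F (m, n', p))
   \<and> (\<forall>m\<in>M. \<forall>n\<in>N. \<forall>p\<in>P. \<forall>p'\<in>P. F (m, n, p + p') = F (m, n, p) + F (m, n, p'))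
   \<and> (\<forall>r. \<forall>m\<in>M. \<forall>n\<in>N. \<forall>p\<in>P. F (sM r m, n, p) = s r (F (m, n, p)))
   \<and> (\<forall>r. \<forall>m\<in>M. \<forall>n\<in>N. \<forall>p\<in>P. F (m, sN r n, p) = s r (F (m, n, p)))
   \<and> (\<forall>r. \<forall>m\<in>M. \<forall>n\<in>N. \<forall>p\<in>P. F (m, n, sP r p) = s r (F (m, n, p)))"

lemma teq3_eval:
  fixes F :: "'a::ab_group_add \<times> 'b::ab_group_add \<times> 'c::ab_group_add \<Rightarrow> 'v::ab_group_add"
  assumes "module s" "teq3 sM sN sP M N P f g" "tril s sM sN sP M N P F"
  shows "tsum s f F = tsum s (g :: _ \<Rightarrow> 'k::comm_ring_1) F"
proof -
  have fg: "f - g \<in> fspan (rels3 sM sN sP M N P)" and tf: "trep3 M N P f" "trep3 M N P g"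
    using assms(2) by (auto simp: teq3_def)
  have V: "module.subspace s {0}" by (rule module.subspace_single_0[OF assms(1)])
  have "finite (fsupp (f - g)) \<and> tsum s (f - g) F \<in> {0}"
  proof (rule span_eval[OF assms(1) V fg])
    fix r assume "r \<in> rels3 sM sN sP M N P"
    then show "finite (fsupp r) \<and> tsum s r F \<in> {0}"
    proof (unfold rels3_def, elim UnE CollectE exE conjE)
      fix m m' n p assume "r = sing (m + m', n, p) - sing (m, n, p) - sing (m', n, p)" "m \<in> M" "m' \<in> M" "n \<in> N" "p \<in> P"
      then show ?thesis using assms(3) unfolding tril_def
        by (simp add: tsum_rel3[OF assms(1)] finite_fsupp_diff finite_fsupp_sing)
    next
      fix m n n' p assume "r = sing (m, n + n', p) - sing (m, n, p) - sing (m, n', p)" "m \<in> M" "n' \<in> N" "n \<in> N" "p \<in> P"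
      then show ?thesis using assms(3) unfolding tril_def
        by (simp add: tsum_rel3[OF assms(1)] finite_fsupp_diff finite_fsupp_sing)
    next
      fix m n p p' assume "r = sing (m, n, p + p') - sing (m, n, p) - sing (m, n, p')" "m \<in> M" "p' \<in> P" "n \<in> N" "p \<in> P"
      then show ?thesis using assms(3) unfolding tril_def
        by (simp add: tsum_rel3[OF assms(1)] finite_fsupp_diff finite_fsupp_sing)
    next
      fix rr m n p assume "r = sing (sM rr m, n, p) - fscale rr (sing (m, n, p))" "m \<in> M" "n \<in> N" "p \<in> P"
      then show ?thesis using assms(3) unfolding tril_def
        by (simp add: tsum_relS[OF assms(1)] finite_fsupp_diff finite_fsupp_fscale finite_fsupp_sing)
    next
      fix rr m n p assume "r = sing (m, sN rr n, p) - fscale rr (sing (m, n, p))" "m \<in> M" "n \<in> N" "p \<in> P"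
      then show ?thesis using assms(3) unfolding tril_def
        by (simp add: tsum_relS[OF assms(1)] finite_fsupp_diff finite_fsupp_fscale finite_fsupp_sing)
    next
      fix rr m n p assume "r = sing (m, n, sP rr p) - fscale rr (sing (m, n, p))" "m \<in> M" "n \<in> N" "p \<in> P"
      then show ?thesis using assms(3) unfolding tril_def
        by (simp add: tsum_relS[OF assms(1)] finite_fsupp_diff finite_fsupp_fscale finite_fsupp_sing)
    qed
  qed
  then show ?thesis
    using tf by (simp add: tsum_diff[OF assms(1)] trep3_def)
qed

lemma tsum_tl3:
  assumes "module s" "finite (fsupp t)"
  shows "tsum s (tl3 t c :: _ \<Rightarrow> 'k::comm_ring_1) F = tsum s t (\<lambda>(a, b). F (a, b, c))"
proof -
  let ?e = "\<lambda>(a, b). (a, b, c)"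
  have sub: "fsupp (tl3 t c) \<subseteq> ?e ` fsupp t"
    by (auto simp: fsupp_def tl3_def split: if_splits)
  have inj: "inj_on ?e (fsupp t)" by (auto simp: inj_on_def)
  have "tsum s (tl3 t c) F = (\<Sum>q\<in>?e ` fsupp t. s (tl3 t c q) (F q))"
    by (rule tsum_superset[OF assms(1) _ sub]) (use assms in simp)
  also have "\<dots> = (\<Sum>q\<in>fsupp t. s (tl3 t c (?e q)) (F (?e q)))"
    by (rule sum.reindex[OF inj, unfolded comp_def])
  also have "\<dots> = tsum s t (\<lambda>(a, b). F (a, b, c))"
    unfolding tsum_def by (rule sum.cong) (auto simp: tl3_def)
  finally show ?thesis .
qed

lemma tsum_tr3:
  assumes "module s" "finite (fsupp t)"
  shows "tsum s (tr3 a t :: _ \<Rightarrow> 'k::comm_ring_1) F = tsum s t (\<lambda>(b, c). F (a, b, c))"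
proof -
  let ?e = "\<lambda>(b, c). (a, b, c)"
  have sub: "fsupp (tr3 a t) \<subseteq> ?e ` fsupp t"
    by (auto simp: fsupp_def tr3_def split: if_splits)
  have inj: "inj_on ?e (fsupp t)" by (auto simp: inj_on_def)
  have "tsum s (tr3 a t) F = (\<Sum>q\<in>?e ` fsupp t. s (tr3 a t q) (F q))"
    by (rule tsum_superset[OF assms(1) _ sub]) (use assms in simp)
  also have "\<dots> = (\<Sum>q\<in>fsupp t. s (tr3 a t (?e q)) (F (?e q)))"
    by (rule sum.reindex[OF inj, unfolded comp_def])
  also have "\<dots> = tsum s t (\<lambda>(b, c). F (a, b, c))"
    unfolding tsum_def by (rule sum.cong) (auto simp: tr3_def)
  finally show ?thesis .
qed

lemma finite_fsupp_tl3: "finite (fsupp t) \<Longrightarrow> finite (fsupp (tl3 t c :: _ \<Rightarrow> 'k::comm_ring_1))"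
proof -
  assume "finite (fsupp t)"
  moreover have "fsupp (tl3 t c) \<subseteq> (\<lambda>(a, b). (a, b, c)) ` fsupp t"
    by (auto simp: fsupp_def tl3_def split: if_splits)
  ultimately show ?thesis by (meson finite_imageI finite_subset)
qed

lemma finite_fsupp_tr3: "finite (fsupp t) \<Longrightarrow> finite (fsupp (tr3 a t :: _ \<Rightarrow> 'k::comm_ring_1))"
proof -
  assume "finite (fsupp t)"
  moreover have "fsupp (tr3 a t) \<subseteq> (\<lambda>(b, c). (a, b, c)) ` fsupp t"
    by (auto simp: fsupp_def tr3_def split: if_splits)
  ultimately show ?thesis by (meson finite_imageI finite_subset)
qed



definition lin where
  "lin s s' M M' \<alpha> \<longleftrightarrow> (\<forall>m\<in>M. \<alpha> m \<in> M') \<and> (\<forall>m\<in>M. \<forall>m'\<in>M. \<alpha> (m + m') = \<alpha> m + \<alpha> m')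
     \<and> (\<forall>r. \<forall>m\<in>M. \<alpha> (s r m) = s' r (\<alpha> m))"

definition bil where
  "bil s sM sN M N F \<longleftrightarrow>
     (\<forall>m\<in>M. \<forall>m'\<in>M. \<forall>n\<in>N. F (m + m', n) = F (m, n) + F (m', n))
   \<and> (\<forall>m\<in>M. \<forall>n\<in>N. \<forall>n'\<in>N. F (m, n + n') = F (m, n) + F (m, n'))
   \<and> (\<forall>r. \<forall>m\<in>M. \<forall>n\<in>N. F (sM r m, n) = s r (F (m, n)))
   \<and> (\<forall>r. \<forall>m\<in>M. \<forall>n\<in>N. F (m, sN r n) = s r (F (m, n)))"

lemma bilI:
  assumes "\<And>m m' n. m \<in> M \<Longrightarrow> m' \<in> M \<Longrightarrow> n \<in> N \<Longrightarrow> F (m + m', n) = F (m, n) + F (m', n)"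
    "\<And>m n n'. m \<in> M \<Longrightarrow> n \<in> N \<Longrightarrow> n' \<in> N \<Longrightarrow> F (m, n + n') = F (m, n) + F (m, n')"
    "\<And>r m n. m \<in> M \<Longrightarrow> n \<in> N \<Longrightarrow> F (sM r m, n) = s r (F (m, n))"
    "\<And>r m n. m \<in> M \<Longrightarrow> n \<in> N \<Longrightarrow> F (m, sN r n) = s r (F (m, n))"
  shows "bil s sM sN M N F"
  using assms unfolding bil_def by blast

lemma bil_bilV:
  fixes F :: "'a::ab_group_add \<times> 'b::ab_group_add \<Rightarrow> 'v::ab_group_add"
  shows "bil s sM sN M N F \<Longrightarrow> bilV s sM sN M N {} {0} F"
  unfolding bil_def by (rule bilV0I) auto

lemma teq2_eval_bil:
  fixes F :: "'a::ab_group_add \<times> 'b::ab_group_add \<Rightarrow> 'v::ab_group_add"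
  assumes "module s" "teq2 sM sN M N {} f g" "bil s sM sN M N F"
  shows "tsum s f F = tsum s (g :: _ \<Rightarrow> 'k::comm_ring_1) F"
  by (rule teq2_eval[OF assms(1,2) bil_bilV[OF assms(3)]])

lemma bil_tsum:
  assumes "module s" "\<And>p. p \<in> fsupp f \<Longrightarrow> bil s sM sN M N (\<Phi> p)"
  shows "bil s sM sN M N (\<lambda>c. tsum s f (\<lambda>p. \<Phi> p c))"
proof (rule bilI)
  fix m m' n assume "m \<in> M" "m' \<in> M" "n \<in> N"
  then have "tsum s f (\<lambda>p. \<Phi> p (m + m', n)) = tsum s f (\<lambda>p. \<Phi> p (m, n) + \<Phi> p (m', n))"
    using assms(2) by (intro tsum_cong) (auto simp: bil_def)
  then show "tsum s f (\<lambda>p. \<Phi> p (m + m', n)) = tsum s f (\<lambda>p. \<Phi> p (m, n)) + tsum s f (\<lambda>p. \<Phi> p (m', n))"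
    by (simp add: tsum_F_add[OF assms(1)])
next
  fix m n n' assume "m \<in> M" "n' \<in> N" "n \<in> N"
  then have "tsum s f (\<lambda>p. \<Phi> p (m, n + n')) = tsum s f (\<lambda>p. \<Phi> p (m, n) + \<Phi> p (m, n'))"
    using assms(2) by (intro tsum_cong) (auto simp: bil_def)
  then show "tsum s f (\<lambda>p. \<Phi> p (m, n + n')) = tsum s f (\<lambda>p. \<Phi> p (m, n)) + tsum s f (\<lambda>p. \<Phi> p (m, n'))"
    by (simp add: tsum_F_add[OF assms(1)])
next
  fix r m n assume "m \<in> M" "n \<in> N"
  then have "tsum s f (\<lambda>p. \<Phi> p (sM r m, n)) = tsum s f (\<lambda>p. s r (\<Phi> p (m, n)))"
    using assms(2) by (intro tsum_cong) (auto simp: bil_def)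
  then show "tsum s f (\<lambda>p. \<Phi> p (sM r m, n)) = s r (tsum s f (\<lambda>p. \<Phi> p (m, n)))"
    by (simp add: tsum_F_scale[OF assms(1)])
next
  fix r m n assume "m \<in> M" "n \<in> N"
  then have "tsum s f (\<lambda>p. \<Phi> p (m, sN r n)) = tsum s f (\<lambda>p. s r (\<Phi> p (m, n)))"
    using assms(2) by (intro tsum_cong) (auto simp: bil_def)
  then show "tsum s f (\<lambda>p. \<Phi> p (m, sN r n)) = s r (tsum s f (\<lambda>p. \<Phi> p (m, n)))"
    by (simp add: tsum_F_scale[OF assms(1)])
qed

lemma bil_comp:
  assumes "bil s sM' sN' M' N' F" "lin sM sM' M M' \<alpha>" "lin sN sN' N N' \<beta>"
  shows "bil s sM sN M N (\<lambda>c. F (\<alpha> (fst c), \<beta> (snd c)))"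
  using assms unfolding bil_def lin_def by (simp add: Ball_def)

locale setting =
  fixes sH :: "'k::comm_ring_1 \<Rightarrow> 'h::ab_group_add \<Rightarrow> 'h"
    and H :: "'x \<Rightarrow> 'x \<Rightarrow> 'h set"
    and mH :: "'x \<Rightarrow> 'x \<Rightarrow> 'x \<Rightarrow> 'h \<Rightarrow> 'h \<Rightarrow> 'h" and uH :: "'x \<Rightarrow> 'h"
    and DH :: "'x \<Rightarrow> 'x \<Rightarrow> 'h \<Rightarrow> 'h \<times> 'h \<Rightarrow> 'k" and eH :: "'x \<Rightarrow> 'x \<Rightarrow> 'h \<Rightarrow> 'k"
    and sA :: "'k \<Rightarrow> 'a::ab_group_add \<Rightarrow> 'a"
    and A :: "'x \<Rightarrow> 'x \<Rightarrow> 'a set"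
    and mA :: "'x \<Rightarrow> 'x \<Rightarrow> 'x \<Rightarrow> 'a \<Rightarrow> 'a \<Rightarrow> 'a" and uA :: "'x \<Rightarrow> 'a"
    and rho :: "'x \<Rightarrow> 'x \<Rightarrow> 'a \<Rightarrow> 'a \<times> 'h \<Rightarrow> 'k"
  assumes HS: "semi_hopf_cat sH H mH uH DH eH"
    and AS: "comodule_cat sH H mH uH DH eH sA A mA uA rho"
    and Gal: "galois_ext sH H uH sA A mA rho"
begin

lemma klA: "klin_cat sA A mA uA" using AS by (simp add: comodule_cat_def)
lemma klH: "klin_cat sH H mH uH" using HS by (simp add: semi_hopf_cat_def)

lemma modA: "module sA" using klA by (simp add: klin_cat_def)
lemma modH: "module sH" using klH by (simp add: klin_cat_def)
lemma subA: "module.subspace sA (A x y)" using klA by (simp add: klin_cat_def)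
lemma subH: "module.subspace sH (H x y)" using klH by (simp add: klin_cat_def)

lemma A0: "0 \<in> A x y" by (rule module.subspace_0[OF modA subA])
lemma Aadd: "a \<in> A x y \<Longrightarrow> b \<in> A x y \<Longrightarrow> a + b \<in> A x y" by (rule module.subspace_add[OF modA subA])
lemma Ascale: "a \<in> A x y \<Longrightarrow> sA r a \<in> A x y" by (rule module.subspace_scale[OF modA subA])
lemma H0: "0 \<in> H x y" by (rule module.subspace_0[OF modH subH])
lemma Hadd: "a \<in> H x y \<Longrightarrow> b \<in> H x y \<Longrightarrow> a + b \<in> H x y" by (rule module.subspace_add[OF modH subH])
lemma Hscale: "a \<in> H x y \<Longrightarrow> sH r a \<in> H x y" by (rule module.subspace_scale[OF modH subH])

lemma mA_in: "a \<in> A x y \<Longrightarrow> b \<in> A y z \<Longrightarrow> mA x y z a b \<in> A x z" using klA by (simp add: klin_cat_def)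
lemma mA_addL: "a \<in> A x y \<Longrightarrow> a' \<in> A x y \<Longrightarrow> b \<in> A y z \<Longrightarrow> mA x y z (a + a') b = mA x y z a b + mA x y z a' b"
  using klA by (simp add: klin_cat_def)
lemma mA_addR: "a \<in> A x y \<Longrightarrow> b \<in> A y z \<Longrightarrow> b' \<in> A y z \<Longrightarrow> mA x y z a (b + b') = mA x y z a b + mA x y z a b'"
  using klA by (simp add: klin_cat_def)
lemma mA_scaleL: "a \<in> A x y \<Longrightarrow> b \<in> A y z \<Longrightarrow> mA x y z (sA r a) b = sA r (mA x y z a b)"
  using klA by (simp add: klin_cat_def)
lemma mA_scaleR: "a \<in> A x y \<Longrightarrow> b \<in> A y z \<Longrightarrow> mA x y z a (sA r b) = sA r (mA x y z a b)"
  using klA by (simp add: klin_cat_def)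
lemma mA_assoc: "a \<in> A x y \<Longrightarrow> b \<in> A y z \<Longrightarrow> c \<in> A z w \<Longrightarrow> mA x y w a (mA y z w b c) = mA x z w (mA x y z a b) c"
  using klA by (simp add: klin_cat_def)
lemma uA_in: "uA x \<in> A x x" using klA by (simp add: klin_cat_def)
lemma mA_unitL: "a \<in> A x y \<Longrightarrow> mA x x y (uA x) a = a" using klA by (simp add: klin_cat_def)
lemma mA_unitR: "a \<in> A x y \<Longrightarrow> mA x y y a (uA y) = a" using klA by (simp add: klin_cat_def)

lemma mH_in: "a \<in> H x y \<Longrightarrow> b \<in> H y z \<Longrightarrow> mH x y z a b \<in> H x z" using klH by (simp add: klin_cat_def)
lemma mH_addL: "a \<in> H x y \<Longrightarrow> a' \<in> H x y \<Longrightarrow> b \<in> H y z \<Longrightarrow> mH x y z (a + a') b = mH x y z a b + mH x y z a' b"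
  using klH by (simp add: klin_cat_def)
lemma mH_addR: "a \<in> H x y \<Longrightarrow> b \<in> H y z \<Longrightarrow> b' \<in> H y z \<Longrightarrow> mH x y z a (b + b') = mH x y z a b + mH x y z a b'"
  using klH by (simp add: klin_cat_def)
lemma mH_scaleL: "a \<in> H x y \<Longrightarrow> b \<in> H y z \<Longrightarrow> mH x y z (sH r a) b = sH r (mH x y z a b)"
  using klH by (simp add: klin_cat_def)
lemma mH_scaleR: "a \<in> H x y \<Longrightarrow> b \<in> H y z \<Longrightarrow> mH x y z a (sH r b) = sH r (mH x y z a b)"
  using klH by (simp add: klin_cat_def)
lemma uH_in: "uH x \<in> H x x" using klH by (simp add: klin_cat_def)
lemma mH_unitL: "a \<in> H x y \<Longrightarrow> mH x x y (uH x) a = a" using klH by (simp add: klin_cat_def)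

lemma comod: "kcomod sH (H x y) (DH x y) (eH x y) sA (A x y) (rho x y)"
  using AS by (simp add: comodule_cat_def)
lemma coalg: "kcoalg sH (H x y) (DH x y) (eH x y)"
  using HS by (simp add: semi_hopf_cat_def)

lemma rho_trep: "a \<in> A x y \<Longrightarrow> trep2 (A x y) (H x y) (rho x y a)"
  using comod by (simp add: kcomod_def)
lemma rho_fin: "a \<in> A x y \<Longrightarrow> finite (fsupp (rho x y a))"
  using rho_trep by (simp add: trep2_def)
lemma rho_supp: "a \<in> A x y \<Longrightarrow> p \<in> fsupp (rho x y a) \<Longrightarrow> fst p \<in> A x y \<and> snd p \<in> H x y"
  using rho_trep[of a x y] by (auto simp: trep2_def)
lemma rho_add: "a \<in> A x y \<Longrightarrow> a' \<in> A x y \<Longrightarrow> teq2 sA sH (A x y) (H x y) {} (rho x y (a + a')) (rho x y a + rho x y a')"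
  using comod by (simp add: kcomod_def)
lemma rho_scale: "a \<in> A x y \<Longrightarrow> teq2 sA sH (A x y) (H x y) {} (rho x y (sA r a)) (fscale r (rho x y a))"
  using comod by (simp add: kcomod_def)
lemma rho_coassoc: "a \<in> A x y \<Longrightarrow> teq3 sA sH sH (A x y) (H x y) (H x y)
   (tsum fscale (rho x y a) (\<lambda>p. tl3 (rho x y (fst p)) (snd p)))
   (tsum fscale (rho x y a) (\<lambda>p. tr3 (fst p) (DH x y (snd p))))"
  using comod by (simp add: kcomod_def)
lemma rho_counit: "a \<in> A x y \<Longrightarrow> tsum sA (rho x y a) (\<lambda>p. sA (eH x y (snd p)) (fst p)) = a"
  using comod by (simp add: kcomod_def)
lemma rho_mult: "a \<in> A x y \<Longrightarrow> b \<in> A y z \<Longrightarrow>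
   teq2 sA sH (A x z) (H x z) {} (rho x z (mA x y z a b))
           (tsum fscale (rho x y a) (\<lambda>p. tsum fscale (rho y z b)
              (\<lambda>q. sing (mA x y z (fst p) (fst q), mH x y z (snd p) (snd q)))))"
  using AS by (simp add: comodule_cat_def)
lemma D_trep: "h \<in> H x y \<Longrightarrow> trep2 (H x y) (H x y) (DH x y h)"
  using coalg by (simp add: kcoalg_def)
lemma D_fin: "h \<in> H x y \<Longrightarrow> finite (fsupp (DH x y h))"
  using D_trep by (simp add: trep2_def)
lemma D_supp: "h \<in> H x y \<Longrightarrow> p \<in> fsupp (DH x y h) \<Longrightarrow> fst p \<in> H x y \<and> snd p \<in> H x y"
  using D_trep[of h x y] by (auto simp: trep2_def)

lemma Gal_inj: "trep2 (A z x) (A x y) f \<Longrightarrow> trep2 (A z x) (A x y) g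
         \<Longrightarrow> teq2 sA sH (A z y) (H x y) {} (can mA rho z x y f) (can mA rho z x y g)
         \<Longrightarrow> teq2 sA sA (A z x) (A x y) (balB A mA (coinv sH H uH sA A rho x) z x y) f g"
  using Gal unfolding galois_ext_def by blast
lemma Gal_surj: "trep2 (A z y) (H x y) t \<Longrightarrow>
         (\<exists>f. trep2 (A z x) (A x y) f \<and> teq2 sA sH (A z y) (H x y) {} (can mA rho z x y f) t)"
  using Gal unfolding galois_ext_def by blast

end



context setting
begin

lemma lin_mAL: "a \<in> A x y \<Longrightarrow> lin sA sA (A y z) (A x z) (\<lambda>b. mA x y z a b)"
  unfolding lin_def by (simp add: mA_in mA_addR mA_scaleR)
lemma lin_mAR: "b \<in> A y z \<Longrightarrow> lin sA sA (A x y) (A x z) (\<lambda>a. mA x y z a b)"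
  unfolding lin_def by (simp add: mA_in mA_addL mA_scaleL)
lemma lin_mHL: "a \<in> H x y \<Longrightarrow> lin sH sH (H y z) (H x z) (\<lambda>b. mH x y z a b)"
  unfolding lin_def by (simp add: mH_in mH_addR mH_scaleR)
lemma lin_mHR: "b \<in> H y z \<Longrightarrow> lin sH sH (H x y) (H x z) (\<lambda>a. mH x y z a b)"
  unfolding lin_def by (simp add: mH_in mH_addL mH_scaleL)
lemma lin_khom: "g \<in> khom s s' M M' \<Longrightarrow> lin s s' M M' g"
  unfolding lin_def khom_def by blast
lemma lin_id: "lin s s M M (\<lambda>m. m)"
  unfolding lin_def by blast

lemma khom_in: "g \<in> khom sH sA (H x z) (A z y) \<Longrightarrow> h \<in> H x z \<Longrightarrow> g h \<in> A z y"
  unfolding khom_def by blast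
lemma khom_add: "g \<in> khom sH sA (H x z) (A z y) \<Longrightarrow> h \<in> H x z \<Longrightarrow> h' \<in> H x z \<Longrightarrow> g (h + h') = g h + g h'"
  unfolding khom_def by blast
lemma khom_scale: "g \<in> khom sH sA (H x z) (A z y) \<Longrightarrow> h \<in> H x z \<Longrightarrow> g (sH r h) = sA r (g h)"
  unfolding khom_def by blast

lemma bil_mA: "bil sA sA sA (A x y) (A y z) (\<lambda>p. mA x y z (fst p) (snd p))"
  by (rule bilI) (simp_all add: mA_addL mA_addR mA_scaleL mA_scaleR)

lemma bil_Fg:
  assumes "g \<in> khom sH sA (H x z) (A z y)"
  shows "bil sA sA sH (A w z) (H x z) (\<lambda>p. mA w z y (fst p) (g (snd p)))"
  using assms
  by (intro bilI) (simp_all add: mA_addL mA_addR mA_scaleL mA_scaleR khom_in khom_add khom_scale Hadd Hscale)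

lemma rho_eval_add:
  assumes "bil sA sA sH (A x y) (H x y) F" "a \<in> A x y" "a' \<in> A x y"
  shows "tsum sA (rho x y (a + a')) F = tsum sA (rho x y a) F + tsum sA (rho x y a') F"
  using teq2_eval_bil[OF modA rho_add[OF assms(2,3)] assms(1)]
  by (simp add: tsum_add[OF modA] rho_fin assms)

lemma rho_eval_scale:
  assumes "bil sA sA sH (A x y) (H x y) F" "a \<in> A x y"
  shows "tsum sA (rho x y (sA r a)) F = sA r (tsum sA (rho x y a) F)"
  using teq2_eval_bil[OF modA rho_scale[OF assms(2)] assms(1)]
  by (simp add: tsum_fscale[OF modA] rho_fin assms)

lemma rho_eval_tsum:
  assumes "bil sA sA sH (A x y) (H x y) F" "\<And>p. p \<in> fsupp f \<Longrightarrow> G p \<in> A x y"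
  shows "tsum sA (rho x y (tsum sA f G)) F = tsum sA f (\<lambda>p. tsum sA (rho x y (G p)) F)"
  by (rule tsum_linear[OF modA modA subA assms(2)])
     (simp_all add: rho_eval_add[OF assms(1)] rho_eval_scale[OF assms(1)])

lemma rho_eval_zero:
  assumes "bil sA sA sH (A x y) (H x y) F"
  shows "tsum sA (rho x y 0) F = 0"
  using rho_eval_add[OF assms A0 A0] by simp

lemma mA_tsum:
  assumes "a \<in> A x y" "\<And>p. p \<in> fsupp f \<Longrightarrow> G p \<in> A y z"
  shows "mA x y z a (tsum sA f G) = tsum sA f (\<lambda>p. mA x y z a (G p))"
  by (rule tsum_linear[OF modA modA subA assms(2)]) (simp_all add: mA_addR mA_scaleR assms(1))

lemma tsum_in_A:
  "(\<And>p. p \<in> fsupp f \<Longrightarrow> G p \<in> A x y) \<Longrightarrow> tsum sA f G \<in> A x y"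
  by (rule tsum_in_subspace[OF modA subA])

lemma rho_mult_eval:
  assumes "a \<in> A x y" "b \<in> A y z" "bil sA sA sH (A x z) (H x z) F"
  shows "tsum sA (rho x z (mA x y z a b)) F =
    tsum sA (rho x y a) (\<lambda>p. tsum sA (rho y z b) (\<lambda>q. F (mA x y z (fst p) (fst q), mH x y z (snd p) (snd q))))"
proof -
  have fin: "finite (fsupp (tsum fscale (rho y z b) (\<lambda>q. sing (mA x y z (fst p) (fst q), mH x y z (snd p) (snd q)) :: _ \<Rightarrow> 'k)))" for p
    by (rule finite_fsupp_tsum_fscale) (simp_all add: rho_fin assms finite_fsupp_sing)
  show ?thesis
    unfolding teq2_eval_bil[OF modA rho_mult[OF assms(1,2)] assms(3)]
    by (simp add: tsum_tsum[OF modA] rho_fin assms fin finite_fsupp_sing tsum_sing[OF modA])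
qed

end



context setting
begin

lemma delta_app: "a \<in> A x z \<Longrightarrow> delta sA A mA rho x y z g a = tsum sA (rho x z a) (\<lambda>p. mA x z y (fst p) (g (snd p)))"
  by (simp add: delta_def)

lemma delta_out: "a \<notin> A x z \<Longrightarrow> delta sA A mA rho x y z g a = 0"
  by (simp add: delta_def)

lemma delta_in:
  assumes "g \<in> khom sH sA (H x z) (A z y)" "a \<in> A x z"
  shows "delta sA A mA rho x y z g a \<in> A x y"
  unfolding delta_app[OF assms(2)]
  by (rule tsum_in_A) (use rho_supp[OF assms(2)] in \<open>blast intro: mA_in khom_in[OF assms(1)]\<close>)

lemma delta_khom:
  assumes "g \<in> khom sH sA (H x z) (A z y)"
  shows "delta sA A mA rho x y z g \<in> khom sA sA (A x z) (A x y)"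
  unfolding khom_def
  using delta_in[OF assms] delta_out
    rho_eval_add[OF bil_Fg[OF assms]] rho_eval_scale[OF bil_Fg[OF assms]]
  by (simp add: delta_app Aadd Ascale)

lemma coinvD: "b \<in> coinv sH H uH sA A rho x \<Longrightarrow> b \<in> A x x \<and> teq2 sA sH (A x x) (H x x) {} (rho x x b) (sing (b, uH x))"
  by (simp add: coinv_def)

lemma delta_B:
  assumes g: "g \<in> khom sH sA (H x z) (A z y)" and b: "b \<in> coinv sH H uH sA A rho x" and a: "a \<in> A x z"
  shows "delta sA A mA rho x y z g (mA x x z b a) = mA x x y b (delta sA A mA rho x y z g a)"
proof -
  have bA: "b \<in> A x x" and bt: "teq2 sA sH (A x x) (H x x) {} (rho x x b) (sing (b, uH x))"
    using coinvD[OF b] by auto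
  let ?G = "\<lambda>c. tsum sA (rho x z a) (\<lambda>q. mA x z y (mA x x z (fst c) (fst q)) (g (mH x x z (snd c) (snd q))))"
  have bilG: "bil sA sA sH (A x x) (H x x) ?G"
    using bil_tsum[OF modA, of "rho x z a" sA sH "A x x" "H x x"
        "\<lambda>q c. mA x z y (mA x x z (fst c) (fst q)) (g (mH x x z (snd c) (snd q)))"]
      bil_comp[OF bil_Fg[OF g] lin_mAR lin_mHR] rho_supp[OF a]
    by simp
  have "delta sA A mA rho x y z g (mA x x z b a) = tsum sA (rho x z (mA x x z b a)) (\<lambda>p. mA x z y (fst p) (g (snd p)))"
    by (rule delta_app[OF mA_in[OF bA a]])
  also have "\<dots> = tsum sA (rho x x b) ?G"
    by (simp add: rho_mult_eval[OF bA a bil_Fg[OF g]])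
  also have "\<dots> = tsum sA (sing (b, uH x)) ?G"
    by (rule teq2_eval_bil[OF modA bt bilG])
  also have "\<dots> = ?G (b, uH x)" by (rule tsum_sing[OF modA])
  also have "\<dots> = tsum sA (rho x z a) (\<lambda>q. mA x x y b (mA x z y (fst q) (g (snd q))))"
    using rho_supp[OF a] by (intro tsum_cong) (simp add: mH_unitL mA_assoc bA khom_in[OF g])
  also have "\<dots> = mA x x y b (delta sA A mA rho x y z g a)"
    unfolding delta_app[OF a]
    by (rule mA_tsum[symmetric, OF bA]) (use rho_supp[OF a] in \<open>blast intro: mA_in khom_in[OF g]\<close>)
  finally show ?thesis .
qed

lemma delta_bhom:
  assumes "g \<in> khom sH sA (H x z) (A z y)"
  shows "delta sA A mA rho x y z g \<in> bhom sH H uH sA A mA rho x z y"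
  unfolding bhom_def using delta_khom[OF assms] delta_B[OF assms] by blast

lemma delta_unit:
  "delta sA A mA rho x y y (kunit sA H eH uA x y) = (\<lambda>a. if a \<in> A x y then a else 0)"
proof
  fix a show "delta sA A mA rho x y y (kunit sA H eH uA x y) a = (if a \<in> A x y then a else 0)"
  proof (cases "a \<in> A x y")
    case True
    have "delta sA A mA rho x y y (kunit sA H eH uA x y) a = tsum sA (rho x y a) (\<lambda>p. sA (eH x y (snd p)) (fst p))"
      unfolding delta_app[OF True] using rho_supp[OF True]
      by (intro tsum_cong) (simp add: kunit_def mA_scaleR mA_unitR uA_in)
    then show ?thesis using rho_counit[OF True] True by simp
  qed (simp add: delta_out)
qed

end



context setting
begin

lemma can_inner_fin: "finite (fsupp (tsum fscale (rho x y b) (\<lambda>q. sing (mA z x y a (fst q), snd q)) :: _ \<Rightarrow> 'k))"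
  if "b \<in> A x y" for a b
  by (rule finite_fsupp_tsum_fscale) (simp_all add: rho_fin that finite_fsupp_sing)

lemma can_eval:
  fixes F :: "'a \<times> 'h \<Rightarrow> 'v::ab_group_add"
  assumes "module s" "trep2 (A z x) (A x y) f"
  shows "tsum s (can mA rho z x y f) F = tsum s f (\<lambda>p. tsum s (rho x y (snd p)) (\<lambda>q. F (mA z x y (fst p) (fst q), snd q)))"
proof -
  have fin: "finite (fsupp f)" and sup: "\<And>p. p \<in> fsupp f \<Longrightarrow> fst p \<in> A z x \<and> snd p \<in> A x y"
    using assms(2) by (auto simp: trep2_def)
  have "tsum s (can mA rho z x y f) F = tsum s f (\<lambda>p. tsum s (tsum fscale (rho x y (snd p)) (\<lambda>q. sing (mA z x y (fst p) (fst q), snd q))) F)"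
    unfolding can_def by (rule tsum_tsum[OF assms(1) fin]) (use sup can_inner_fin in blast)
  also have "\<dots> = tsum s f (\<lambda>p. tsum s (rho x y (snd p)) (\<lambda>q. F (mA z x y (fst p) (fst q), snd q)))"
    using sup by (intro tsum_cong) (simp add: tsum_tsum[OF assms(1)] rho_fin finite_fsupp_sing tsum_sing[OF assms(1)])
  finally show ?thesis .
qed

lemma can_trep:
  assumes "trep2 (A z x) (A x y) f"
  shows "trep2 (A z y) (H x y) (can mA rho z x y f)"
proof -
  have fin: "finite (fsupp f)" and sup: "\<And>p. p \<in> fsupp f \<Longrightarrow> fst p \<in> A z x \<and> snd p \<in> A x y"
    using assms by (auto simp: trep2_def)
  show ?thesis unfolding can_def
  proof (rule trep2_tsum[OF fin], rule trep2_tsum)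
    fix p assume p: "p \<in> fsupp f"
    show "finite (fsupp (rho x y (snd p)))" using sup[OF p] rho_fin by blast
    fix q assume q: "q \<in> fsupp (rho x y (snd p))"
    have "fst q \<in> A x y" "snd q \<in> H x y" using rho_supp[OF _ q] sup[OF p] by auto
    then show "trep2 (A z y) (H x y) (sing (mA z x y (fst p) (fst q), snd q))"
      using sup[OF p] by (auto intro!: trep2_sing mA_in)
  qed
qed

lemma recon:
  assumes g: "g \<in> khom sH sA (H x z) (A z y)" and h: "h \<in> H x z"
    and f: "trep2 (A z x) (A x z) f"
    and c: "teq2 sA sH (A z z) (H x z) {} (can mA rho z x z f) (sing (uA z, h))"
  shows "g h = tsum sA f (\<lambda>p. mA z x y (fst p) (delta sA A mA rho x y z g (snd p)))"
proof -
  have sup: "\<And>p. p \<in> fsupp f \<Longrightarrow> fst p \<in> A z x \<and> snd p \<in> A x z"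
    using f by (auto simp: trep2_def)
  let ?F = "\<lambda>p. mA z z y (fst p) (g (snd p))"
  have "tsum sA f (\<lambda>p. mA z x y (fst p) (delta sA A mA rho x y z g (snd p)))
      = tsum sA f (\<lambda>p. tsum sA (rho x z (snd p)) (\<lambda>q. ?F (mA z x z (fst p) (fst q), snd q)))"
  proof (rule tsum_cong)
    fix p assume p: "p \<in> fsupp f"
    have "mA z x y (fst p) (delta sA A mA rho x y z g (snd p))
        = tsum sA (rho x z (snd p)) (\<lambda>q. mA z x y (fst p) (mA x z y (fst q) (g (snd q))))"
      unfolding delta_app[OF sup[OF p, THEN conjunct2]]
      by (rule mA_tsum) (use sup[OF p] rho_supp in \<open>blast intro: mA_in khom_in[OF g]\<close>)+
    also have "\<dots> = tsum sA (rho x z (snd p)) (\<lambda>q. ?F (mA z x z (fst p) (fst q), snd q))"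
      using sup[OF p] rho_supp[OF sup[OF p, THEN conjunct2]]
      by (intro tsum_cong) (simp add: mA_assoc khom_in[OF g])
    finally show "mA z x y (fst p) (delta sA A mA rho x y z g (snd p)) = tsum sA (rho x z (snd p)) (\<lambda>q. ?F (mA z x z (fst p) (fst q), snd q))" .
  qed
  also have "\<dots> = tsum sA (can mA rho z x z f) ?F"
    by (rule can_eval[OF modA f, symmetric])
  also have "\<dots> = tsum sA (sing (uA z, h)) ?F"
    by (rule teq2_eval_bil[OF modA c bil_Fg[OF g]])
  also have "\<dots> = g h"
    by (simp add: tsum_sing[OF modA] mA_unitL khom_in[OF g h])
  finally show ?thesis by simp
qed

lemma exists_can:
  assumes "h \<in> H x z"
  shows "\<exists>f. trep2 (A z x) (A x z) f \<and> teq2 sA sH (A z z) (H x z) {} (can mA rho z x z f) (sing (uA z, h))"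
  by (rule Gal_surj) (simp add: trep2_sing uA_in assms)

lemma delta_inj: "inj_on (delta sA A mA rho x y z) (khom sH sA (H x z) (A z y))"
proof (rule inj_onI)
  fix g g' assume g: "g \<in> khom sH sA (H x z) (A z y)" and g': "g' \<in> khom sH sA (H x z) (A z y)"
    and eq: "delta sA A mA rho x y z g = delta sA A mA rho x y z g'"
  show "g = g'"
  proof
    fix h show "g h = g' h"
    proof (cases "h \<in> H x z")
      case True
      obtain f where "trep2 (A z x) (A x z) f" "teq2 sA sH (A z z) (H x z) {} (can mA rho z x z f) (sing (uA z, h))"
        using exists_can[OF True] by blast
      then show ?thesis using recon[OF g True] recon[OF g' True] eq by simp
    next
      case False
      then show ?thesis using g g' by (simp add: khom_def)
    qed
  qed
qed

end



lemma rels2_1: "m \<in> M \<Longrightarrow> m' \<in> M \<Longrightarrow> n \<in> N \<Longrightarrow> sing (m + m', n) - sing (m, n) - sing (m', n) \<in> rels2 sM sN M N Bal"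
  unfolding rels2_def by blast
lemma rels2_2: "m \<in> M \<Longrightarrow> n \<in> N \<Longrightarrow> n' \<in> N \<Longrightarrow> sing (m, n + n') - sing (m, n) - sing (m, n') \<in> rels2 sM sN M N Bal"
  unfolding rels2_def by blast
lemma rels2_3: "m \<in> M \<Longrightarrow> n \<in> N \<Longrightarrow> sing (sM r m, n) - fscale r (sing (m, n)) \<in> rels2 sM sN M N Bal"
  unfolding rels2_def by blast
lemma rels2_4: "m \<in> M \<Longrightarrow> n \<in> N \<Longrightarrow> sing (m, sN r n) - fscale r (sing (m, n)) \<in> rels2 sM sN M N Bal"
  unfolding rels2_def by blast

context setting
begin

lemma bhom_khom: "\<phi> \<in> bhom sH H uH sA A mA rho x z y \<Longrightarrow> \<phi> \<in> khom sA sA (A x z) (A x y)"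
  by (simp add: bhom_def)
lemma bhom_B: "\<phi> \<in> bhom sH H uH sA A mA rho x z y \<Longrightarrow> b \<in> coinv sH H uH sA A rho x \<Longrightarrow> a \<in> A x z
   \<Longrightarrow> \<phi> (mA x x z b a) = mA x x y b (\<phi> a)"
  by (simp add: bhom_def)
lemma bk_in: "\<phi> \<in> bhom sH H uH sA A mA rho x z y \<Longrightarrow> a \<in> A x z \<Longrightarrow> \<phi> a \<in> A x y"
  by (simp add: bhom_def khom_def)
lemma bk_add: "\<phi> \<in> bhom sH H uH sA A mA rho x z y \<Longrightarrow> a \<in> A x z \<Longrightarrow> a' \<in> A x z \<Longrightarrow> \<phi> (a + a') = \<phi> a + \<phi> a'"
  by (simp add: bhom_def khom_def)
lemma bk_scale: "\<phi> \<in> bhom sH H uH sA A mA rho x z y \<Longrightarrow> a \<in> A x z \<Longrightarrow> \<phi> (sA r a) = sA r (\<phi> a)"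
  by (simp add: bhom_def khom_def)
lemma bk_out: "\<phi> \<in> bhom sH H uH sA A mA rho x z y \<Longrightarrow> a \<notin> A x z \<Longrightarrow> \<phi> a = 0"
  by (simp add: bhom_def khom_def)

lemma bal_Phi:
  assumes phi: "\<phi> \<in> bhom sH H uH sA A mA rho x z y"
  shows "bilV sA sA sA (A w x) (A x z) (balB A mA (coinv sH H uH sA A rho x) w x z) {0}
           (\<lambda>p. mA w x y (fst p) (\<phi> (snd p)))"
proof (rule bilV0I)
  fix p q assume "(p, q) \<in> balB A mA (coinv sH H uH sA A rho x) w x z"
  then obtain a b a' where pq: "p = (mA w x x a b, a')" "q = (a, mA x x z b a')"
    and a: "a \<in> A w x" and b: "b \<in> coinv sH H uH sA A rho x" and a': "a' \<in> A x z"
    unfolding balB_def by blast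
  have bA: "b \<in> A x x" using coinvD[OF b] by blast
  show "(\<lambda>p. mA w x y (fst p) (\<phi> (snd p))) p = (\<lambda>p. mA w x y (fst p) (\<phi> (snd p))) q"
    using pq by (simp add: bhom_B[OF phi b a'] mA_assoc[OF a bA bk_in[OF phi a']])
qed (simp_all add: mA_addL mA_addR mA_scaleL mA_scaleR bk_in[OF phi] bk_add[OF phi] bk_scale[OF phi] Aadd Ascale)

lemma W:
  assumes phi: "\<phi> \<in> bhom sH H uH sA A mA rho x z y"
    and f: "trep2 (A z x) (A x z) f" and f': "trep2 (A z x) (A x z) f'"
    and c: "teq2 sA sH (A z z) (H x z) {} (can mA rho z x z f) (can mA rho z x z f')"
  shows "tsum sA f (\<lambda>p. mA z x y (fst p) (\<phi> (snd p))) = tsum sA f' (\<lambda>p. mA z x y (fst p) (\<phi> (snd p)))"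
  by (rule teq2_eval[OF modA Gal_inj[OF f f' c] bal_Phi[OF phi]])

definition chooseF where
  "chooseF x z h = (SOME f. trep2 (A z x) (A x z) f \<and> teq2 sA sH (A z z) (H x z) {} (can mA rho z x z f) (sing (uA z, h)))"

definition ginv where
  "ginv x y z \<phi> = (\<lambda>h. if h \<in> H x z then tsum sA (chooseF x z h) (\<lambda>p. mA z x y (fst p) (\<phi> (snd p))) else 0)"

lemma chooseF: "h \<in> H x z \<Longrightarrow> trep2 (A z x) (A x z) (chooseF x z h)
   \<and> teq2 sA sH (A z z) (H x z) {} (can mA rho z x z (chooseF x z h)) (sing (uA z, h))"
  unfolding chooseF_def by (rule someI_ex[OF exists_can])

lemma ginv_eq:
  assumes phi: "\<phi> \<in> bhom sH H uH sA A mA rho x z y" and h: "h \<in> H x z"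
    and f: "trep2 (A z x) (A x z) f"
    and c: "teq2 sA sH (A z z) (H x z) {} (can mA rho z x z f) (sing (uA z, h))"
  shows "ginv x y z \<phi> h = tsum sA f (\<lambda>p. mA z x y (fst p) (\<phi> (snd p)))"
  unfolding ginv_def using h chooseF[OF h]
  by (auto intro!: W[OF phi _ f] teq2_trans[OF _ teq2_sym[OF c]])

lemma can_add:
  assumes "trep2 (A z x) (A x y) f" "trep2 (A z x) (A x y) f'"
  shows "can mA rho z x y (f + f') = can mA rho z x y f + can mA rho z x y f'"
  unfolding can_def by (rule tsum_add[OF module_fscale]) (use assms in \<open>simp_all add: trep2_def\<close>)

lemma can_fscale:
  assumes "trep2 (A z x) (A x y) f"
  shows "can mA rho z x y (fscale r f) = fscale r (can mA rho z x y f)"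
  unfolding can_def by (rule tsum_fscale[OF module_fscale]) (use assms in \<open>simp_all add: trep2_def\<close>)

lemma ginv_khom:
  assumes phi: "\<phi> \<in> bhom sH H uH sA A mA rho x z y"
  shows "ginv x y z \<phi> \<in> khom sH sA (H x z) (A z y)"
  unfolding khom_def
proof (intro CollectI conjI ballI allI impI)
  fix h assume h: "h \<in> H x z"
  have "trep2 (A z x) (A x z) (chooseF x z h)" using chooseF[OF h] by blast
  then show "ginv x y z \<phi> h \<in> A z y"
    unfolding ginv_def using h
    by (auto simp: trep2_def intro!: tsum_in_A mA_in bk_in[OF phi])
next
  fix h h' assume h: "h \<in> H x z" and h': "h' \<in> H x z"
  let ?f = "chooseF x z h" and ?f' = "chooseF x z h'"
  have f: "trep2 (A z x) (A x z) ?f" "teq2 sA sH (A z z) (H x z) {} (can mA rho z x z ?f) (sing (uA z, h))"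
    using chooseF[OF h] by auto
  have f': "trep2 (A z x) (A x z) ?f'" "teq2 sA sH (A z z) (H x z) {} (can mA rho z x z ?f') (sing (uA z, h'))"
    using chooseF[OF h'] by auto
  have c: "teq2 sA sH (A z z) (H x z) {} (can mA rho z x z (?f + ?f')) (sing (uA z, h + h'))"
    unfolding can_add[OF f(1) f'(1)]
    by (rule teq2_trans[OF teq2_add[OF f(2) f'(2)] teq2_sym[OF teq2_relR_add]])
       (simp_all add: uA_in h h' Hadd)
  have "ginv x y z \<phi> (h + h') = tsum sA (?f + ?f') (\<lambda>p. mA z x y (fst p) (\<phi> (snd p)))"
    by (rule ginv_eq[OF phi Hadd[OF h h'] trep2_add[OF f(1) f'(1)] c])
  also have "\<dots> = ginv x y z \<phi> h + ginv x y z \<phi> h'"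
    using f(1) f'(1) h h' by (simp add: tsum_add[OF modA] trep2_def ginv_def)
  finally show "ginv x y z \<phi> (h + h') = ginv x y z \<phi> h + ginv x y z \<phi> h'" .
next
  fix r h assume h: "h \<in> H x z"
  let ?f = "chooseF x z h"
  have f: "trep2 (A z x) (A x z) ?f" "teq2 sA sH (A z z) (H x z) {} (can mA rho z x z ?f) (sing (uA z, h))"
    using chooseF[OF h] by auto
  have c: "teq2 sA sH (A z z) (H x z) {} (can mA rho z x z (fscale r ?f)) (sing (uA z, sH r h))"
    unfolding can_fscale[OF f(1)]
    by (rule teq2_trans[OF teq2_fscale[OF f(2)] teq2_sym[OF teq2_relR_scale]])
       (simp_all add: uA_in h Hscale)
  have "ginv x y z \<phi> (sH r h) = tsum sA (fscale r ?f) (\<lambda>p. mA z x y (fst p) (\<phi> (snd p)))"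
    by (rule ginv_eq[OF phi Hscale[OF h] trep2_fscale[OF f(1)] c])
  also have "\<dots> = sA r (ginv x y z \<phi> h)"
    using f(1) h by (simp add: tsum_fscale[OF modA] trep2_def ginv_def)
  finally show "ginv x y z \<phi> (sH r h) = sA r (ginv x y z \<phi> h)" .
next
  fix h assume "h \<notin> H x z"
  then show "ginv x y z \<phi> h = 0" by (simp add: ginv_def)
qed

end



context setting
begin

lemma M_teq2:
  assumes p1: "c0 \<in> A x z" and t: "teq2 sA sH (A z z) (H x z) {} t t'"
  shows "teq2 sA sH (A x z) (H x z) {}
     (tsum fscale t (\<lambda>c. sing (mA x z z c0 (fst c), snd c)))
     (tsum fscale t' (\<lambda>c. sing (mA x z z c0 (fst c), snd c)))"
proof -
  let ?M = "\<lambda>c. sing (mA x z z c0 (fst c), snd c) :: 'a \<times> 'h \<Rightarrow> 'k"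
  have tr: "trep2 (A z z) (H x z) t" "trep2 (A z z) (H x z) t'" using t by (auto simp: teq2_def)
  have trM: "trep2 (A x z) (H x z) (tsum fscale u ?M)" if "trep2 (A z z) (H x z) u" for u
  proof (rule trep2_tsum)
    show "finite (fsupp u)" using that by (simp add: trep2_def)
    fix c assume "c \<in> fsupp u"
    then have "fst c \<in> A z z" "snd c \<in> H x z" using that by (auto simp: trep2_def)
    then show "trep2 (A x z) (H x z) (?M c)" by (intro trep2_sing mA_in p1)
  qed
  have bv: "bilV fscale sA sH (A z z) (H x z) {} (fspan (rels2 sA sH (A x z) (H x z) {})) ?M"
    unfolding bilV_def
    by (auto intro!: fspan_base rels2_1 rels2_2 rels2_3 rels2_4 mA_in p1 simp: mA_addR mA_scaleR p1)
  have "tsum fscale t ?M - tsum fscale t' ?M \<in> fspan (rels2 sA sH (A x z) (H x z) {})"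
    by (rule teq2_evalV[OF module_fscale fspan_subspace t bv])
  then show ?thesis using trM tr by (simp add: teq2_def)
qed

lemma delta_ginv:
  assumes phi: "\<phi> \<in> bhom sH H uH sA A mA rho x z y"
  shows "delta sA A mA rho x y z (ginv x y z \<phi>) = \<phi>"
proof
  fix a show "delta sA A mA rho x y z (ginv x y z \<phi>) a = \<phi> a"
  proof (cases "a \<in> A x z")
    case False
    then show ?thesis by (simp add: delta_out bk_out[OF phi])
  next
    case a: True
    let ?fp = "\<lambda>p. chooseF x z (snd p)"
    have supa: "\<And>p. p \<in> fsupp (rho x z a) \<Longrightarrow> fst p \<in> A x z \<and> snd p \<in> H x z"
      using rho_supp[OF a] by blast
    have fp: "\<And>p. p \<in> fsupp (rho x z a) \<Longrightarrow> trep2 (A z x) (A x z) (?fp p)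
        \<and> teq2 sA sH (A z z) (H x z) {} (can mA rho z x z (?fp p)) (sing (uA z, snd p))"
      using chooseF supa by blast
    have fpfin: "\<And>p. p \<in> fsupp (rho x z a) \<Longrightarrow> finite (fsupp (?fp p))"
      using fp by (simp add: trep2_def)
    have fpsup: "\<And>p q. p \<in> fsupp (rho x z a) \<Longrightarrow> q \<in> fsupp (?fp p) \<Longrightarrow> fst q \<in> A z x \<and> snd q \<in> A x z"
    proof -
      fix p q assume p: "p \<in> fsupp (rho x z a)" and q: "q \<in> fsupp (?fp p)"
      have "fsupp (?fp p) \<subseteq> A z x \<times> A x z" using fp[OF p] by (simp add: trep2_def)
      then show "fst q \<in> A z x \<and> snd q \<in> A x z" using q by auto
    qed
    define T :: "'a \<times> 'a \<Rightarrow> 'k" where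
      "T = tsum fscale (rho x z a) (\<lambda>p. tsum fscale (?fp p) (\<lambda>q. sing (mA x z x (fst p) (fst q), snd q)))"
    define T' :: "'a \<times> 'a \<Rightarrow> 'k" where "T' = sing (uA x, a)"
    have innerfin: "\<And>p. p \<in> fsupp (rho x z a) \<Longrightarrow>
        finite (fsupp (tsum fscale (?fp p) (\<lambda>q. sing (mA x z x (fst p) (fst q), snd q)) :: 'a \<times> 'a \<Rightarrow> 'k))"
      by (rule finite_fsupp_tsum_fscale) (simp_all add: fpfin finite_fsupp_sing)
    have trT: "trep2 (A x x) (A x z) T"
      unfolding T_def
    proof (rule trep2_tsum[OF rho_fin[OF a]], rule trep2_tsum)
      fix p assume p: "p \<in> fsupp (rho x z a)"
      show "finite (fsupp (?fp p))" by (rule fpfin[OF p])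
      fix q assume q: "q \<in> fsupp (?fp p)"
      show "trep2 (A x x) (A x z) (sing (mA x z x (fst p) (fst q), snd q))"
        using supa[OF p] fpsup[OF p q] by (auto intro!: trep2_sing mA_in)
    qed
    have trT': "trep2 (A x x) (A x z) T'"
      unfolding T'_def by (rule trep2_sing[OF uA_in a])
    have canT': "can mA rho x x z T' = tsum fscale (rho x z a) (\<lambda>q. sing q)"
    proof -
      have "can mA rho x x z T' = tsum fscale (rho x z a) (\<lambda>q. sing (mA x x z (uA x) (fst q), snd q))"
        unfolding T'_def can_def tsum_sing[OF module_fscale] by simp
      also have "\<dots> = tsum fscale (rho x z a) (\<lambda>q. sing q)"
        using rho_supp[OF a] by (intro tsum_cong) (simp add: mA_unitL)
      finally show ?thesis .
    qed
    let ?C = "\<lambda>p'. tsum fscale (rho x z (snd p')) (\<lambda>q'. sing (mA x x z (fst p') (fst q'), snd q')) :: 'a \<times> 'h \<Rightarrow> 'k"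
    have canT_eq: "can mA rho x x z T = tsum fscale (rho x z a)
        (\<lambda>p. tsum fscale (?fp p) (\<lambda>q. ?C (mA x z x (fst p) (fst q), snd q)))"
    proof -
      have "can mA rho x x z T = tsum fscale T ?C" by (simp add: can_def)
      also have "\<dots> = tsum fscale (rho x z a) (\<lambda>p. tsum fscale (tsum fscale (?fp p) (\<lambda>q. sing (mA x z x (fst p) (fst q), snd q))) ?C)"
        unfolding T_def by (rule tsum_tsum[OF module_fscale rho_fin[OF a] innerfin])
      also have "\<dots> = tsum fscale (rho x z a) (\<lambda>p. tsum fscale (?fp p) (\<lambda>q. ?C (mA x z x (fst p) (fst q), snd q)))"
        by (intro tsum_cong) (simp add: tsum_tsum[OF module_fscale] fpfin finite_fsupp_sing tsum_sing[OF module_fscale])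
      finally show ?thesis .
    qed
    have perp: "teq2 sA sH (A x z) (H x z) {}
        (tsum fscale (?fp p) (\<lambda>q. ?C (mA x z x (fst p) (fst q), snd q))) (sing p)"
      if p: "p \<in> fsupp (rho x z a)" for p
    proof -
      let ?M = "\<lambda>c. sing (mA x z z (fst p) (fst c), snd c) :: 'a \<times> 'h \<Rightarrow> 'k"
      have p1: "fst p \<in> A x z" and p2: "snd p \<in> H x z" using supa[OF p] by auto
      have e1: "tsum fscale (?fp p) (\<lambda>q. ?C (mA x z x (fst p) (fst q), snd q))
          = tsum fscale (can mA rho z x z (?fp p)) ?M"
      proof -
        have "tsum fscale (can mA rho z x z (?fp p)) ?M = tsum fscale (?fp p)
           (\<lambda>q. tsum fscale (rho x z (snd q)) (\<lambda>q'. ?M (mA z x z (fst q) (fst q'), snd q')))"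
          by (rule can_eval[OF module_fscale]) (use fp[OF p] in blast)
        also have "\<dots> = tsum fscale (?fp p) (\<lambda>q. ?C (mA x z x (fst p) (fst q), snd q))"
        proof (rule tsum_cong)
          fix q assume q: "q \<in> fsupp (?fp p)"
          show "tsum fscale (rho x z (snd q)) (\<lambda>q'. ?M (mA z x z (fst q) (fst q'), snd q'))
              = ?C (mA x z x (fst p) (fst q), snd q)"
            using fpsup[OF p q] rho_supp p1
            by (auto intro!: tsum_cong simp: mA_assoc)
        qed
        finally show ?thesis by simp
      qed
      have e2: "tsum fscale (sing (uA z, snd p)) ?M = sing p"
        by (simp add: tsum_sing[OF module_fscale] mA_unitR p1)
      show ?thesis
        unfolding e1 e2[symmetric]
        by (rule M_teq2[OF p1]) (use fp[OF p] in blast)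
    qed
    have canT: "teq2 sA sH (A x z) (H x z) {} (can mA rho x x z T) (can mA rho x x z T')"
      unfolding canT_eq canT' by (rule teq2_tsum[OF rho_fin[OF a] perp])
    have bal: "teq2 sA sA (A x x) (A x z) (balB A mA (coinv sH H uH sA A rho x) x x z) T T'"
      by (rule Gal_inj[OF trT trT' canT])
    have ev: "tsum sA T (\<lambda>p. mA x x y (fst p) (\<phi> (snd p))) = tsum sA T' (\<lambda>p. mA x x y (fst p) (\<phi> (snd p)))"
      by (rule teq2_eval[OF modA bal bal_Phi[OF phi]])
    have evT': "tsum sA T' (\<lambda>p. mA x x y (fst p) (\<phi> (snd p))) = \<phi> a"
      unfolding T'_def by (simp add: tsum_sing[OF modA] mA_unitL bk_in[OF phi a])
    have evT: "tsum sA T (\<lambda>p. mA x x y (fst p) (\<phi> (snd p))) = delta sA A mA rho x y z (ginv x y z \<phi>) a"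
    proof -
      have "tsum sA T (\<lambda>p. mA x x y (fst p) (\<phi> (snd p))) = tsum sA (rho x z a)
         (\<lambda>p. tsum sA (?fp p) (\<lambda>q. mA x x y (mA x z x (fst p) (fst q)) (\<phi> (snd q))))"
        unfolding T_def
        by (simp add: tsum_tsum[OF modA] rho_fin[OF a] innerfin fpfin finite_fsupp_sing tsum_sing[OF modA]
             cong: tsum_cong)
      also have "\<dots> = tsum sA (rho x z a) (\<lambda>p. mA x z y (fst p) (ginv x y z \<phi> (snd p)))"
      proof (rule tsum_cong)
        fix p assume p: "p \<in> fsupp (rho x z a)"
        have p1: "fst p \<in> A x z" and p2: "snd p \<in> H x z" using supa[OF p] by auto
        have "tsum sA (?fp p) (\<lambda>q. mA x x y (mA x z x (fst p) (fst q)) (\<phi> (snd q)))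
            = tsum sA (?fp p) (\<lambda>q. mA x z y (fst p) (mA z x y (fst q) (\<phi> (snd q))))"
          using fpsup[OF p] by (intro tsum_cong) (simp add: mA_assoc p1 bk_in[OF phi])
        also have "\<dots> = mA x z y (fst p) (tsum sA (?fp p) (\<lambda>q. mA z x y (fst q) (\<phi> (snd q))))"
          by (rule mA_tsum[symmetric, OF p1]) (use fpsup[OF p] in \<open>blast intro: mA_in bk_in[OF phi]\<close>)
        also have "\<dots> = mA x z y (fst p) (ginv x y z \<phi> (snd p))"
          by (simp add: ginv_def p2)
        finally show "tsum sA (?fp p) (\<lambda>q. mA x x y (mA x z x (fst p) (fst q)) (\<phi> (snd q)))
            = mA x z y (fst p) (ginv x y z \<phi> (snd p))" .
      qed
      also have "\<dots> = delta sA A mA rho x y z (ginv x y z \<phi>) a"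
        by (simp add: delta_app[OF a])
      finally show ?thesis .
    qed
    show ?thesis using ev evT evT' by simp
  qed
qed

end



context setting
begin

lemma kop_app: "h \<in> H x u \<Longrightarrow> kop sA H mH DH mA rho x y z u g g' h =
   tsum sA (DH x u h) (\<lambda>p. tsum sA (rho u z (g' (snd p))) (\<lambda>q. mA u z y (fst q) (g (mH x u z (fst p) (snd q)))))"
  by (simp add: kop_def)

lemma delta_comp:
  assumes g: "g \<in> khom sH sA (H x z) (A z y)" and g': "g' \<in> khom sH sA (H x u) (A u z)"
  shows "delta sA A mA rho x y u (kop sA H mH DH mA rho x y z u g g')
          = delta sA A mA rho x y z g \<circ> delta sA A mA rho x z u g'"
proof
  fix a
  show "delta sA A mA rho x y u (kop sA H mH DH mA rho x y z u g g') a
          = (delta sA A mA rho x y z g \<circ> delta sA A mA rho x z u g') a"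
  proof (cases "a \<in> A x u")
    case False
    then show ?thesis
      by (simp add: delta_out delta_app[OF A0] rho_eval_zero[OF bil_Fg[OF g]])
  next
    case a: True
    define F where "F c h = (\<lambda>q. mA x u y c (mA u z y (fst q) (g (mH x u z h (snd q)))))" for c h
    define G where "G t = tsum sA (rho u z (g' (snd (snd t)))) (F (fst t) (fst (snd t)))" for t
    have Fin: "mA x u y c (mA u z y b (g (mH x u z h k))) \<in> A x y"
      if "c \<in> A x u" "b \<in> A u z" "h \<in> H x u" "k \<in> H u z" for c b h k
      using that by (intro mA_in khom_in[OF g] mH_in)
    have bilF: "bil sA sA sH (A u z) (H u z) (F c h)" if c: "c \<in> A x u" and h: "h \<in> H x u" for c h
      unfolding F_def
      by (rule bilI) (simp_all add: c h mA_addL mA_addR mA_scaleL mA_scaleR mH_addR mH_scaleR mH_in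
          khom_in[OF g] khom_add[OF g] khom_scale[OF g] mA_in)
    have g'in: "h \<in> H x u \<Longrightarrow> g' h \<in> A u z" for h by (rule khom_in[OF g'])
    have trilG: "tril sA sA sH sH (A x u) (H x u) (H x u) G"
      unfolding tril_def
    proof (intro conjI ballI allI)
      fix m m' n p assume m: "m \<in> A x u" "m' \<in> A x u" and n: "n \<in> H x u" and p: "p \<in> H x u"
      show "G (m + m', n, p) = G (m, n, p) + G (m', n, p)"
        unfolding G_def F_def using rho_supp[OF g'in[OF p]] m n
        by (simp add: tsum_F_add[OF modA, symmetric] mA_addL Fin mA_in khom_in[OF g] mH_in cong: tsum_cong2)
    next
      fix m n n' p assume m: "m \<in> A x u" and n: "n \<in> H x u" "n' \<in> H x u" and p: "p \<in> H x u"
      show "G (m, n + n', p) = G (m, n, p) + G (m, n', p)"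
        unfolding G_def F_def using rho_supp[OF g'in[OF p]] m n
        by (simp add: tsum_F_add[OF modA, symmetric] mH_addL khom_add[OF g] mH_in mA_addR khom_in[OF g] mA_in cong: tsum_cong2)
    next
      fix m n p p' assume m: "m \<in> A x u" and n: "n \<in> H x u" and p: "p \<in> H x u" "p' \<in> H x u"
      show "G (m, n, p + p') = G (m, n, p) + G (m, n, p')"
        unfolding G_def using khom_add[OF g' p] rho_eval_add[OF bilF[OF m n] g'in[OF p(1)] g'in[OF p(2)]]
        by simp
    next
      fix r m n p assume m: "m \<in> A x u" and n: "n \<in> H x u" and p: "p \<in> H x u"
      show "G (sA r m, n, p) = sA r (G (m, n, p))"
        unfolding G_def F_def using rho_supp[OF g'in[OF p]] m n
        by (simp add: tsum_F_scale[OF modA, symmetric] mA_scaleL Fin mA_in khom_in[OF g] mH_in cong: tsum_cong2)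
    next
      fix r m n p assume m: "m \<in> A x u" and n: "n \<in> H x u" and p: "p \<in> H x u"
      show "G (m, sH r n, p) = sA r (G (m, n, p))"
        unfolding G_def F_def using rho_supp[OF g'in[OF p]] m n
        by (simp add: tsum_F_scale[OF modA, symmetric] mH_scaleL khom_scale[OF g] mH_in mA_scaleR khom_in[OF g] mA_in cong: tsum_cong2)
    next
      fix r m n p assume m: "m \<in> A x u" and n: "n \<in> H x u" and p: "p \<in> H x u"
      show "G (m, n, sH r p) = sA r (G (m, n, p))"
        unfolding G_def using khom_scale[OF g' p] rho_eval_scale[OF bilF[OF m n] g'in[OF p]]
        by simp
    qed
    have supa: "\<And>p. p \<in> fsupp (rho x u a) \<Longrightarrow> fst p \<in> A x u \<and> snd p \<in> H x u"
      using rho_supp[OF a] by blast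
    have trfin: "\<And>p. p \<in> fsupp (rho x u a) \<Longrightarrow> finite (fsupp (tr3 (fst p) (DH x u (snd p)) :: _ \<Rightarrow> 'k))"
      using supa by (intro finite_fsupp_tr3 D_fin) blast
    have tlfin: "\<And>p. p \<in> fsupp (rho x u a) \<Longrightarrow> finite (fsupp (tl3 (rho x u (fst p)) (snd p) :: _ \<Rightarrow> 'k))"
      using supa by (intro finite_fsupp_tl3 rho_fin) blast
    have L: "delta sA A mA rho x y u (kop sA H mH DH mA rho x y z u g g') a
        = tsum sA (rho x u a) (\<lambda>p. tsum sA (DH x u (snd p)) (\<lambda>r. G (fst p, fst r, snd r)))"
      unfolding delta_app[OF a]
    proof (rule tsum_cong)
      fix p assume p: "p \<in> fsupp (rho x u a)"
      have p1: "fst p \<in> A x u" and p2: "snd p \<in> H x u" using supa[OF p] by auto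
      have "mA x u y (fst p) (kop sA H mH DH mA rho x y z u g g' (snd p))
         = tsum sA (DH x u (snd p)) (\<lambda>r. mA x u y (fst p) (tsum sA (rho u z (g' (snd r)))
              (\<lambda>q. mA u z y (fst q) (g (mH x u z (fst r) (snd q))))))"
        unfolding kop_app[OF p2]
        by (rule mA_tsum[OF p1], rule tsum_in_A)
           (use D_supp[OF p2] rho_supp[OF g'in] in \<open>blast intro: mA_in khom_in[OF g] mH_in\<close>)
      also have "\<dots> = tsum sA (DH x u (snd p)) (\<lambda>r. G (fst p, fst r, snd r))"
      proof (rule tsum_cong)
        fix r assume r: "r \<in> fsupp (DH x u (snd p))"
        have r12: "fst r \<in> H x u" "snd r \<in> H x u" using D_supp[OF p2 r] by auto
        show "mA x u y (fst p) (tsum sA (rho u z (g' (snd r))) (\<lambda>q. mA u z y (fst q) (g (mH x u z (fst r) (snd q)))))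
            = G (fst p, fst r, snd r)"
          unfolding G_def F_def
          by (simp, rule mA_tsum[OF p1])
             (use rho_supp[OF g'in[OF r12(2)]] r12 in \<open>blast intro: mA_in khom_in[OF g] mH_in\<close>)
      qed
      finally show "mA x u y (fst p) (kop sA H mH DH mA rho x y z u g g' (snd p))
          = tsum sA (DH x u (snd p)) (\<lambda>r. G (fst p, fst r, snd r))" .
    qed
    also have "\<dots> = tsum sA (tsum fscale (rho x u a) (\<lambda>p. tr3 (fst p) (DH x u (snd p)))) G"
      by (simp add: tsum_tsum[OF modA] rho_fin[OF a] trfin tsum_tr3[OF modA] D_fin supa split_beta cong: tsum_cong2)
    also have "\<dots> = tsum sA (tsum fscale (rho x u a) (\<lambda>p. tl3 (rho x u (fst p)) (snd p))) G"
      by (rule teq3_eval[OF modA rho_coassoc[OF a] trilG, symmetric])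
    also have "\<dots> = tsum sA (rho x u a) (\<lambda>p. tsum sA (rho x u (fst p)) (\<lambda>q. G (fst q, snd q, snd p)))"
      by (simp add: tsum_tsum[OF modA] rho_fin[OF a] tlfin tsum_tl3[OF modA] rho_fin supa split_beta cong: tsum_cong2)
    also have "\<dots> = (delta sA A mA rho x y z g \<circ> delta sA A mA rho x z u g') a"
    proof -
      have bin: "delta sA A mA rho x z u g' a \<in> A x z" by (rule delta_in[OF g' a])
      have "(delta sA A mA rho x y z g \<circ> delta sA A mA rho x z u g') a
         = tsum sA (rho x z (tsum sA (rho x u a) (\<lambda>p. mA x u z (fst p) (g' (snd p))))) (\<lambda>p. mA x z y (fst p) (g (snd p)))"
        by (simp only: comp_def delta_app[OF bin], simp only: delta_app[OF a])
      also have "\<dots> = tsum sA (rho x u a) (\<lambda>p. tsum sA (rho x z (mA x u z (fst p) (g' (snd p)))) (\<lambda>p. mA x z y (fst p) (g (snd p))))"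
        by (rule rho_eval_tsum[OF bil_Fg[OF g]]) (use supa in \<open>blast intro: mA_in g'in\<close>)
      also have "\<dots> = tsum sA (rho x u a) (\<lambda>p. tsum sA (rho x u (fst p)) (\<lambda>q. G (fst q, snd q, snd p)))"
      proof (rule tsum_cong)
        fix p assume p: "p \<in> fsupp (rho x u a)"
        have p1: "fst p \<in> A x u" and p2: "snd p \<in> H x u" using supa[OF p] by auto
        show "tsum sA (rho x z (mA x u z (fst p) (g' (snd p)))) (\<lambda>p. mA x z y (fst p) (g (snd p)))
            = tsum sA (rho x u (fst p)) (\<lambda>q. G (fst q, snd q, snd p))"
          unfolding rho_mult_eval[OF p1 g'in[OF p2] bil_Fg[OF g]] G_def F_def
          using rho_supp[OF p1] rho_supp[OF g'in[OF p2]]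
          by (intro tsum_cong) (simp add: mA_assoc khom_in[OF g] mH_in cong: tsum_cong2)
      qed
      finally show ?thesis by simp
    qed
    finally show ?thesis .
  qed
qed

end


theorem proposition7p2:
  fixes sH :: "'k::comm_ring_1 \<Rightarrow> 'h::ab_group_add \<Rightarrow> 'h"
    and H :: "'x \<Rightarrow> 'x \<Rightarrow> 'h set"
    and mH :: "'x \<Rightarrow> 'x \<Rightarrow> 'x \<Rightarrow> 'h \<Rightarrow> 'h \<Rightarrow> 'h" and uH :: "'x \<Rightarrow> 'h"
    and DH :: "'x \<Rightarrow> 'x \<Rightarrow> 'h \<Rightarrow> 'h \<times> 'h \<Rightarrow> 'k" and eH :: "'x \<Rightarrow> 'x \<Rightarrow> 'h \<Rightarrow> 'k"
    and sA :: "'k \<Rightarrow> 'a::ab_group_add \<Rightarrow> 'a"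
    and A :: "'x \<Rightarrow> 'x \<Rightarrow> 'a set"
    and mA :: "'x \<Rightarrow> 'x \<Rightarrow> 'x \<Rightarrow> 'a \<Rightarrow> 'a \<Rightarrow> 'a" and uA :: "'x \<Rightarrow> 'a"
    and rho :: "'x \<Rightarrow> 'x \<Rightarrow> 'a \<Rightarrow> 'a \<times> 'h \<Rightarrow> 'k"
  assumes H: "semi_hopf_cat sH H mH uH DH eH"
    and A: "comodule_cat sH H mH uH DH eH sA A mA uA rho"
    and Gal: "galois_ext sH H uH sA A mA rho"
  shows
    "(\<forall>x y z. bij_betw (delta sA A mA rho x y z) (khom sH sA (H x z) (A z y))
                        (bhom sH H uH sA A mA rho x z y))
   \<and> (\<forall>x y z. \<forall>\<phi>\<in>bhom sH H uH sA A mA rho x z y. \<forall>h\<in>H x z. \<forall>f.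
        trep2 (A z x) (A x z) f
        \<and> teq2 sA sH (A z z) (H x z) {} (can mA rho z x z f) (sing (uA z, h))
        \<longrightarrow> inv_into (khom sH sA (H x z) (A z y)) (delta sA A mA rho x y z) \<phi> h
            = tsum sA f (\<lambda>p. mA z x y (fst p) (\<phi> (snd p))))
   \<and> (\<forall>x y z u g g'. g \<in> khom sH sA (H x z) (A z y) \<and> g' \<in> khom sH sA (H x u) (A u z) \<longrightarrow>
        delta sA A mA rho x y u (kop sA H mH DH mA rho x y z u g g')
          = delta sA A mA rho x y z g \<circ> delta sA A mA rho x z u g')
   \<and> (\<forall>x y. delta sA A mA rho x y y (kunit sA H eH uA x y) = (\<lambda>a. if a \<in> A x y then a else 0))"
proof -
  interpret setting sH H mH uH DH eH sA A mA uA rho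
    by (rule setting.intro[OF H A Gal])
  have bij: "bij_betw (delta sA A mA rho x y z) (khom sH sA (H x z) (A z y))
                        (bhom sH H uH sA A mA rho x z y)" for x y z
    unfolding bij_betw_def
  proof
    show "inj_on (delta sA A mA rho x y z) (khom sH sA (H x z) (A z y))" by (rule delta_inj)
    show "delta sA A mA rho x y z ` khom sH sA (H x z) (A z y) = bhom sH H uH sA A mA rho x z y"
    proof
      show "delta sA A mA rho x y z ` khom sH sA (H x z) (A z y) \<subseteq> bhom sH H uH sA A mA rho x z y"
        using delta_bhom by blast
      show "bhom sH H uH sA A mA rho x z y \<subseteq> delta sA A mA rho x y z ` khom sH sA (H x z) (A z y)"
      proof
        fix \<phi> assume phi: "\<phi> \<in> bhom sH H uH sA A mA rho x z y"
        then have "\<phi> = delta sA A mA rho x y z (ginv x y z \<phi>)" by (simp add: delta_ginv)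
        then show "\<phi> \<in> delta sA A mA rho x y z ` khom sH sA (H x z) (A z y)"
          using ginv_khom[OF phi] by blast
      qed
    qed
  qed
  have inv: "inv_into (khom sH sA (H x z) (A z y)) (delta sA A mA rho x y z) \<phi> h
            = tsum sA f (\<lambda>p. mA z x y (fst p) (\<phi> (snd p)))"
    if phi: "\<phi> \<in> bhom sH H uH sA A mA rho x z y" and h: "h \<in> H x z"
      and f: "trep2 (A z x) (A x z) f"
      and c: "teq2 sA sH (A z z) (H x z) {} (can mA rho z x z f) (sing (uA z, h))" for x y z \<phi> h f
  proof -
    have "inv_into (khom sH sA (H x z) (A z y)) (delta sA A mA rho x y z) \<phi>
        = inv_into (khom sH sA (H x z) (A z y)) (delta sA A mA rho x y z) (delta sA A mA rho x y z (ginv x y z \<phi>))"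
      by (simp add: delta_ginv[OF phi])
    also have "\<dots> = ginv x y z \<phi>"
      by (rule inv_into_f_f[OF delta_inj ginv_khom[OF phi]])
    finally show ?thesis using ginv_eq[OF phi h f c] by simp
  qed
  show ?thesis
    using bij inv delta_comp delta_unit by blast
qed

end
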